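(* Let $r:\mathfrak h^*\to\wedge^2\mathfrak g$ be a splittable triangular dynamical $r$-matrix. Then (1) $\mathfrak g_\lambda=\mathfrak g_\mu$ for all $\lambda,\mu\in\mathfrak h^*$; denote this common Lie subalgebra by $\mathfrak g_1$; (2) $r(\lambda)\in\wedge^2\mathfrak g_1$ for all $\lambda$, and $r$, regarded as a map $\mathfrak h^*\to\wedge^2\mathfrak g_1$, is a non-degenerate triangular dynamical $r$-matrix for the pair $(\mathfrak g_1,\mathfrak h)$, i.e. $\mathfrak h+r(\lambda)^\#(\mathfrak h^\perp)=\mathfrak g_1$ where now $r(\lambda)^\#:\mathfrak g_1^*\to\mathfrak g_1$ and $\mathfrak h^\perp$ is the annihilator of $\mathfrak h$ in $\mathfrak g_1^*$.
   Context: Let $\mathfrak g$ be a finite-dimensional real Lie algebra and $\mathfrak h\subset\mathfrak g$ an abelian Lie subalgebra of dimension $l$ with basis $h_1,\dots,h_l$; $(\lambda^i)$ are the induced coordinates on $\mathfrak h^*$. A triangular dynamical $r$-matrix is a smooth map $r:\mathfrak h^*\to\wedge^2\mathfrak g$ with $[h,r(\lambda)]=0$ for $h\in\mathfrak h$ and $\sum_i h_i\wedge\frac{\partial r}{\partial\lambda^i}+\frac12[r,r]=0$ (Schouten-type bracket on $\wedge^\bullet\mathfrak g$). For $\rho\in\wedge^2\mathfrak g$, $\rho^\#:\mathfrak g^*\to\mathfrak g$ is $\langle\rho^\#\xi,\eta\rangle=\rho(\xi,\eta)$; $\mathfrak h^\perp\subset\mathfrak g^*$ is the annihilator of $\mathfrak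 h$; $\mathfrak g_\lambda=\mathfrak h+r(\lambda)^\#\mathfrak h^\perp$ (a Lie subalgebra). $r$ is splittable if $i^*(\{\xi\in\mathfrak g^*:r(\lambda)^\#\xi\in\mathfrak h\})=\mathfrak h^*$ for every $\lambda$, where $i^*:\mathfrak g^*\to\mathfrak h^*$ is restriction. A triangular dynamical $r$-matrix is non-degenerate if $\mathfrak g_\lambda$ equals the whole Lie algebra. *)

theory Defs
  imports "HOL-Analysis.Analysis"
begin

text \<open>Coordinates: the Lie algebra g is real^'n with bracket br; g* is real^'n,
paired with g by the inner product. A bivector rho in wedge^2 g is an
antisymmetric matrix, rho(xi,eta) = xi . (rho *v eta). The abelian subalgebra h
has basis hb :: 'l => real^'n, and h* has coordinates lambda :: real^'l.\<close>

definition lie_algebra :: "(real^'n \<Rightarrow> real^'n \<Rightarrow> real^'n) \<Rightarrow> bool" where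
  "lie_algebra br \<longleftrightarrow> bilinear br \<and> (\<forall>x. br x x = 0) \<and>
     (\<forall>x y z. br x (br y z) + br y (br z x) + br z (br x y) = 0)"

definition lie_subalgebra :: "(real^'n \<Rightarrow> real^'n \<Rightarrow> real^'n) \<Rightarrow> (real^'n) set \<Rightarrow> bool" where
  "lie_subalgebra br V \<longleftrightarrow> subspace V \<and> (\<forall>x\<in>V. \<forall>y\<in>V. br x y \<in> V)"

definition outer :: "real^'n \<Rightarrow> real^'n \<Rightarrow> real^'n^'n" where
  "outer a b = (\<chi> i j. a $ i * b $ j)"

definition wedge2 :: "(real^'n) set \<Rightarrow> (real^'n^'n) set" where
  "wedge2 V = span {outer a b - outer b a | a b. a \<in> V \<and> b \<in> V}"

definition bv :: "real^'n^'n \<Rightarrow> real^'n \<Rightarrow> real^'n \<Rightarrow> real" where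
  "bv \<rho> \<xi> \<eta> = \<xi> \<bullet> (\<rho> *v \<eta>)"

text \<open>rho^# : g* -> g, <rho^# xi, eta> = rho(xi, eta).\<close>
definition rsharp :: "real^'n^'n \<Rightarrow> real^'n \<Rightarrow> real^'n" where
  "rsharp \<rho> \<xi> = transpose \<rho> *v \<xi>"

text \<open>Adjoint action of x on a 2-tensor: ad_x(a (x) b) = [x,a] (x) b + a (x) [x,b].\<close>
definition ad2 :: "(real^'n \<Rightarrow> real^'n \<Rightarrow> real^'n) \<Rightarrow> real^'n \<Rightarrow> real^'n^'n \<Rightarrow> real^'n^'n" where
  "ad2 br x \<rho> = matrix (br x) ** \<rho> + \<rho> ** transpose (matrix (br x))"

definition hspace :: "('l \<Rightarrow> real^'n) \<Rightarrow> (real^'n) set" where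
  "hspace hb = span (range hb)"

definition hperp :: "('l \<Rightarrow> real^'n) \<Rightarrow> (real^'n) set" where
  "hperp hb = {\<xi>. \<forall>x\<in>hspace hb. \<xi> \<bullet> x = 0}"

text \<open>C-infinity: there is a family of everywhere differentiable maps containing f
and closed under taking partial derivatives.\<close>
definition smooth_map :: "(real^'l \<Rightarrow> 'b::real_normed_vector) \<Rightarrow> bool" where
  "smooth_map f \<longleftrightarrow> (\<exists>S. f \<in> S \<and> (\<forall>g\<in>S. (\<forall>x. g differentiable (at x)) \<and>
      (\<forall>i. (\<lambda>x. frechet_derivative g (at x) (axis i 1)) \<in> S)))"

definition pderiv_r :: "(real^'l \<Rightarrow> real^'n^'n) \<Rightarrow> 'l \<Rightarrow> real^'l \<Rightarrow> real^'n^'n" where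
  "pderiv_r r i lam = frechet_derivative r (at lam) (axis i 1)"

text \<open>The equation  sum_i h_i /\ dr/dlambda^i + 1/2 [r,r] = 0, evaluated on three
covectors xi, eta, zeta (with the Schouten bracket written out:
1/2 [r,r](xi,eta,zeta) = cyclic sum of <xi, [r^# eta, r^# zeta]>).\<close>
definition cdybe :: "(real^'n \<Rightarrow> real^'n \<Rightarrow> real^'n) \<Rightarrow> ('l::finite \<Rightarrow> real^'n)
    \<Rightarrow> (real^'l \<Rightarrow> real^'n^'n) \<Rightarrow> bool" where
  "cdybe br hb r \<longleftrightarrow> (\<forall>lam \<xi> \<eta> \<zeta>.
     (\<Sum>i\<in>UNIV. (\<xi> \<bullet> hb i) * bv (pderiv_r r i lam) \<eta> \<zeta>
               + (\<eta> \<bullet> hb i) * bv (pderiv_r r i lam) \<zeta> \<xi>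
               + (\<zeta> \<bullet> hb i) * bv (pderiv_r r i lam) \<xi> \<eta>)
     + (\<xi> \<bullet> br (rsharp (r lam) \<eta>) (rsharp (r lam) \<zeta>)
        + \<eta> \<bullet> br (rsharp (r lam) \<zeta>) (rsharp (r lam) \<xi>)
        + \<zeta> \<bullet> br (rsharp (r lam) \<xi>) (rsharp (r lam) \<eta>)) = 0)"

text \<open>Triangular dynamical r-matrix for the pair (V, h), V a Lie subalgebra of g
containing h; covectors of V are restrictions of covectors of g.\<close>
definition tdrm :: "(real^'n \<Rightarrow> real^'n \<Rightarrow> real^'n) \<Rightarrow> (real^'n) set \<Rightarrow> ('l::finite \<Rightarrow> real^'n)
    \<Rightarrow> (real^'l \<Rightarrow> real^'n^'n) \<Rightarrow> bool" where
  "tdrm br V hb r \<longleftrightarrow> lie_subalgebra br V \<and> range hb \<subseteq> V \<and> smooth_map r \<and>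
     (\<forall>lam. r lam \<in> wedge2 V) \<and> (\<forall>lam i. ad2 br (hb i) (r lam) = 0) \<and> cdybe br hb r"

definition g_lam :: "('l \<Rightarrow> real^'n) \<Rightarrow> (real^'l \<Rightarrow> real^'n^'n) \<Rightarrow> real^'l \<Rightarrow> (real^'n) set" where
  "g_lam hb r lam = {x + rsharp (r lam) \<xi> | x \<xi>. x \<in> hspace hb \<and> \<xi> \<in> hperp hb}"

definition restr_h :: "('l \<Rightarrow> real^'n) \<Rightarrow> real^'n \<Rightarrow> real^'l" where
  "restr_h hb \<xi> = (\<chi> i. \<xi> \<bullet> hb i)"

definition splittable :: "('l \<Rightarrow> real^'n) \<Rightarrow> (real^'l \<Rightarrow> real^'n^'n) \<Rightarrow> bool" where
  "splittable hb r \<longleftrightarrow> (\<forall>lam. restr_h hb ` {\<xi>. rsharp (r lam) \<xi> \<in> hspace hb} = UNIV)"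

definition nondegenerate :: "(real^'n) set \<Rightarrow> ('l \<Rightarrow> real^'n) \<Rightarrow> (real^'l \<Rightarrow> real^'n^'n) \<Rightarrow> bool" where
  "nondegenerate V hb r \<longleftrightarrow> (\<forall>lam. g_lam hb r lam = V)"

end

theory Submission
  imports Defs
begin

lemma gronwall_fwd:
  fixes \<phi> \<phi>' :: "real \<Rightarrow> real"
  assumes ab: "a \<le> b" and cont: "continuous_on {a..b} \<phi>"
    and der: "\<And>t. a < t \<Longrightarrow> t < b \<Longrightarrow> (\<phi> has_real_derivative \<phi>' t) (at t)"
    and le: "\<And>t. a < t \<Longrightarrow> t < b \<Longrightarrow> \<phi>' t \<le> K * \<phi> t"
    and z: "\<phi> a = 0" and nn: "\<And>t. t \<in> {a..b} \<Longrightarrow> \<phi> t \<ge> 0"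
    and t: "t \<in> {a..b}"
  shows "\<phi> t = 0"
proof -
  define \<psi> where "\<psi> s = exp (- K * s) * \<phi> s" for s
  have "\<psi> a \<ge> \<psi> t"
  proof (rule DERIV_nonpos_imp_decreasing_open[of a t \<psi>])
    show "a \<le> t" using t by auto
    have c: "continuous_on {a..t} \<phi>" using continuous_on_subset[OF cont] t by auto
    show "continuous_on {a..t} \<psi>" unfolding \<psi>_def
      by (intro continuous_on_mult continuous_intros c)
    fix s assume s: "a < s" "s < t"
    have e: "((\<lambda>s. exp (- K * s)) has_real_derivative (exp (- K * s) * (- K))) (at s)"
      by (auto intro!: derivative_eq_intros)
    have "(\<psi> has_real_derivative (exp (- K * s) * (-K) * \<phi> s + exp (- K * s) * \<phi>' s)) (at s)"
      unfolding \<psi>_def using DERIV_mult[OF e der[of s]] s t by (simp add: algebra_simps)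
    moreover have "exp (- K * s) * (-K) * \<phi> s + exp (- K * s) * \<phi>' s \<le> 0"
    proof -
      have "exp (- K * s) * (\<phi>' s - K * \<phi> s) \<le> 0"
        using le[of s] s t by (intro mult_nonneg_nonpos) auto
      then show ?thesis by (simp add: algebra_simps)
    qed
    ultimately show "\<exists>y. (\<psi> has_real_derivative y) (at s) \<and> y \<le> 0" by blast
  qed
  then have "\<psi> t \<le> 0" using z by (simp add: \<psi>_def)
  then have "\<phi> t \<le> 0" unfolding \<psi>_def by (simp add: mult_le_0_iff)
  then show ?thesis using nn[OF t] by simp
qed

lemma gronwall_bwd:
  fixes \<phi> \<phi>' :: "real \<Rightarrow> real"
  assumes ab: "a \<le> b" and cont: "continuous_on {a..b} \<phi>"
    and der: "\<And>t. a < t \<Longrightarrow> t < b \<Longrightarrow> (\<phi> has_real_derivative \<phi>' t) (at t)"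
    and le: "\<And>t. a < t \<Longrightarrow> t < b \<Longrightarrow> - K * \<phi> t \<le> \<phi>' t"
    and z: "\<phi> b = 0" and nn: "\<And>t. t \<in> {a..b} \<Longrightarrow> \<phi> t \<ge> 0"
    and t: "t \<in> {a..b}"
  shows "\<phi> t = 0"
proof -
  define \<psi> where "\<psi> s = exp (K * s) * \<phi> s" for s
  have "\<psi> t \<le> \<psi> b"
  proof (rule DERIV_nonneg_imp_increasing_open[of t b \<psi>])
    show "t \<le> b" using t by auto
    have c: "continuous_on {t..b} \<phi>" using continuous_on_subset[OF cont] t by auto
    show "continuous_on {t..b} \<psi>" unfolding \<psi>_def
      by (intro continuous_on_mult continuous_intros c)
    fix s assume s: "t < s" "s < b"
    have e: "((\<lambda>s. exp (K * s)) has_real_derivative (exp (K * s) * K)) (at s)"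
      by (auto intro!: derivative_eq_intros)
    have "(\<psi> has_real_derivative (exp (K * s) * K * \<phi> s + exp (K * s) * \<phi>' s)) (at s)"
      unfolding \<psi>_def using DERIV_mult[OF e der[of s]] s t by (simp add: algebra_simps)
    moreover have "exp (K * s) * K * \<phi> s + exp (K * s) * \<phi>' s \<ge> 0"
    proof -
      have "exp (K * s) * (\<phi>' s + K * \<phi> s) \<ge> 0"
        using le[of s] s t by (intro mult_nonneg_nonneg) auto
      then show ?thesis by (simp add: algebra_simps)
    qed
    ultimately show "\<exists>y. (\<psi> has_real_derivative y) (at s) \<and> y \<ge> 0" by blast
  qed
  then have "\<psi> t \<le> 0" using z by (simp add: \<psi>_def)
  then have "\<phi> t \<le> 0" unfolding \<psi>_def by (simp add: mult_le_0_iff)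
  then show ?thesis using nn[OF t] by simp
qed

lemma lin_bound:
  fixes G :: "real \<Rightarrow> 'a::euclidean_space \<Rightarrow> 'b::real_normed_vector"
  assumes cont: "continuous_on ({a..b} \<times> UNIV) (\<lambda>p. G (fst p) (snd p))"
    and lin: "\<And>t. linear (G t)"
  shows "\<exists>K>0. \<forall>t\<in>{a..b}. \<forall>z. norm (G t z) \<le> K * norm z"
proof -
  have "compact ({a..b} \<times> sphere (0::'a) 1)" by (intro compact_Times) auto
  moreover have "continuous_on ({a..b} \<times> sphere (0::'a) 1) (\<lambda>p. G (fst p) (snd p))"
    by (rule continuous_on_subset[OF cont]) auto
  ultimately have "bounded ((\<lambda>p. G (fst p) (snd p)) ` ({a..b} \<times> sphere 0 1))"
    by (intro compact_imp_bounded compact_continuous_image)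
  then obtain B where B0: "\<forall>y\<in>(\<lambda>p. G (fst p) (snd p)) ` ({a..b} \<times> sphere 0 1). norm y \<le> B"
    unfolding bounded_iff by blast
  have B: "norm (G (fst p) (snd p)) \<le> B" if "p \<in> {a..b} \<times> sphere (0::'a) 1" for p
    using B0 that by blast
  show ?thesis
  proof (intro exI[of _ "max B 1"] conjI ballI allI)
    fix t z assume t: "t \<in> {a..b}"
    show "norm (G t z) \<le> max B 1 * norm z"
    proof (cases "z = 0")
      case True then show ?thesis using linear_0[OF lin] by simp
    next
      case False
      have "norm (G t (z /\<^sub>R norm z)) \<le> B" using B[of "(t, z /\<^sub>R norm z)"] t False by auto
      moreover have "G t z = norm z *\<^sub>R G t (z /\<^sub>R norm z)"
        using False by (simp add: linear_scale[OF lin])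
      ultimately have "norm (G t z) \<le> norm z * B" by (simp add: mult_left_mono)
      also have "\<dots> \<le> max B 1 * norm z" by (metis mult.commute mult_right_mono max.cobounded1 norm_ge_zero)
      finally show ?thesis .
    qed
  qed simp
qed

lemma integral_pow_01:
  assumes "0 \<le> t"
  shows "integral {0..t} (\<lambda>s::real. s ^ k) = t ^ Suc k / Suc k"
proof -
  have "((\<lambda>s::real. s ^ k) has_integral (t ^ Suc k / Suc k - 0 ^ Suc k / Suc k)) {0..t}"
  proof (rule fundamental_theorem_of_calculus[OF assms, of "\<lambda>s. s ^ Suc k / Suc k"])
    fix x :: real assume "x \<in> {0..t}"
    have "((\<lambda>s. s ^ Suc k / Suc k) has_real_derivative (real (Suc k) * x ^ k / Suc k)) (at x)"
      using DERIV_cdivide[OF DERIV_pow[of "Suc k" x], of "Suc k"] by simp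
    then have "((\<lambda>s. s ^ Suc k / Suc k) has_real_derivative x ^ k) (at x)"
      by (simp del: of_nat_Suc)
    then show "((\<lambda>s. s ^ Suc k / Suc k) has_vector_derivative x ^ k) (at x within {0..t})"
      by (simp add: has_real_derivative_iff_has_vector_derivative[symmetric] has_field_derivative_at_within)
  qed
  then show ?thesis by (simp add: integral_unique)
qed

lemma cont_comp_F:
  fixes F :: "real \<Rightarrow> 'a::euclidean_space \<Rightarrow> 'b::real_normed_vector"
  assumes cont: "continuous_on ({0..1} \<times> UNIV) (\<lambda>p. F (fst p) (snd p))"
    and y: "continuous_on {0..1} y"
  shows "continuous_on {0..1} (\<lambda>s. F s (y s))"
proof -
  have "continuous_on {0..1} (\<lambda>s. (s, y s))" by (intro continuous_intros y)
  from continuous_on_compose2[OF cont this] show ?thesis by auto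
qed

lemma picard_linear:
  fixes F :: "real \<Rightarrow> 'a::euclidean_space \<Rightarrow> 'a"
  assumes cont: "continuous_on ({0..1} \<times> UNIV) (\<lambda>p. F (fst p) (snd p))"
    and lin: "\<And>t. linear (F t)"
  shows "\<exists>x. x 0 = x0 \<and> continuous_on {0..1} x \<and>
     (\<forall>t\<in>{0..1}. (x has_vector_derivative F t (x t)) (at t within {0..1}))"
proof -
  obtain K where K: "K > 0" "\<And>t z. t \<in> {0..1} \<Longrightarrow> norm (F t z) \<le> K * norm z"
    using lin_bound[OF cont lin] by blast
  have lip: "norm (F t z - F t w) \<le> K * norm (z - w)" if "t \<in> {0..1}" for t z w
    using K(2)[OF that, of "z - w"] by (simp add: linear_diff[OF lin])
  define P :: "nat \<Rightarrow> real \<Rightarrow> 'a" where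
    "P = rec_nat (\<lambda>t. x0) (\<lambda>k p t. x0 + integral {0..t} (\<lambda>s. F s (p s)))"
  have P0: "P 0 = (\<lambda>t. x0)" and PS: "P (Suc k) = (\<lambda>t. x0 + integral {0..t} (\<lambda>s. F s (P k s)))" for k
    by (simp_all add: P_def)
  have contP: "continuous_on {0..1} (P k)" for k
  proof (induction k)
    case 0 then show ?case by (simp add: P0)
  next
    case (Suc k)
    have "continuous_on {0..1} (\<lambda>s. F s (P k s))" by (rule cont_comp_F[OF cont Suc])
    then have "(\<lambda>s. F s (P k s)) integrable_on {0..1}" by (rule integrable_continuous_real)
    then have "continuous_on {0..1} (\<lambda>t. integral {0..t} (\<lambda>s. F s (P k s)))"
      by (rule indefinite_integral_continuous_1)
    then show ?case unfolding PS by (intro continuous_intros)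
  qed
  have contF: "continuous_on {0..1} (\<lambda>s. F s (P k s))" for k by (rule cont_comp_F[OF cont contP])
  have intF: "(\<lambda>s. F s (P k s)) integrable_on {0..t}" if "t \<le> 1" for k t
    by (rule integrable_continuous_real, rule continuous_on_subset[OF contF]) (use that in auto)
  have "compact ((\<lambda>t. P 1 t - P 0 t) ` {0..1})"
    by (intro compact_continuous_image continuous_intros contP) auto
  then obtain M where M0: "\<forall>y\<in>(\<lambda>t. P 1 t - P 0 t) ` {0..1}. norm y \<le> M"
    using compact_imp_bounded bounded_iff by metis
  have M: "norm (P 1 t - P 0 t) \<le> M" if "t \<in> {0..1}" for t using M0 that by auto
  have "norm (P 1 0 - P 0 0) \<le> M" by (rule M) simp
  then have Mnn: "M \<ge> 0" by (meson norm_ge_zero order_trans)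
  have bnd: "norm (P (Suc k) t - P k t) \<le> M * (K * t) ^ k / fact k" if "t \<in> {0..1}" for k t
    using that
  proof (induction k arbitrary: t)
    case 0 then show ?case using M[of t] by simp
  next
    case (Suc k)
    have t1: "t \<le> 1" "0 \<le> t" using Suc.prems by auto
    have "P (Suc (Suc k)) t - P (Suc k) t = integral {0..t} (\<lambda>s. F s (P (Suc k) s) - F s (P k s))"
    proof -
      have e1: "P (Suc (Suc k)) t = x0 + integral {0..t} (\<lambda>s. F s (P (Suc k) s))" by (simp only: PS[of "Suc k"])
      have e2: "P (Suc k) t = x0 + integral {0..t} (\<lambda>s. F s (P k s))" by (simp only: PS[of k])
      show ?thesis unfolding e1 e2 by (simp add: integral_diff[OF intF[OF t1(1)] intF[OF t1(1)]])
    qed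
    also have "norm \<dots> \<le> integral {0..t} (\<lambda>s. K * (M * (K * s) ^ k / fact k))"
    proof (rule integral_norm_bound_integral)
      show "(\<lambda>s. F s (P (Suc k) s) - F s (P k s)) integrable_on {0..t}"
        by (intro integrable_diff intF t1)
      show "(\<lambda>s. K * (M * (K * s) ^ k / fact k)) integrable_on {0..t}"
        by (intro integrable_continuous_real continuous_intros) auto
      fix s assume s: "s \<in> {0..t}"
      then have s1: "s \<in> {0..1}" using t1 by auto
      have "norm (F s (P (Suc k) s) - F s (P k s)) \<le> K * norm (P (Suc k) s - P k s)"
        by (rule lip[OF s1])
      also have "\<dots> \<le> K * (M * (K * s) ^ k / fact k)"
        using mult_left_mono[OF Suc.IH[OF s1], of K] K(1) by simp
      finally show "norm (F s (P (Suc k) s) - F s (P k s)) \<le> K * (M * (K * s) ^ k / fact k)" .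
    qed
    also have "integral {0..t} (\<lambda>s. K * (M * (K * s) ^ k / fact k))
        = (K * M * K ^ k / fact k) * integral {0..t} (\<lambda>s. s ^ k)"
    proof -
      have "(\<lambda>s. K * (M * (K * s) ^ k / fact k)) = (\<lambda>s. (K * M * K ^ k / fact k) *\<^sub>R s ^ k)"
        by (auto simp: power_mult_distrib)
      then show ?thesis by (simp only: integral_cmul) simp
    qed
    also have "\<dots> = M * (K * t) ^ Suc k / fact (Suc k)"
      using t1 by (simp add: integral_pow_01 power_mult_distrib fact_Suc field_simps del: of_nat_Suc)
    finally show ?case .
  qed
  define f where "f k t = P (Suc k) t - P k t" for k t
  have fb: "norm (f k t) \<le> M * (inverse (fact k) * K ^ k)" if "t \<in> {0..1}" for k t
  proof -
    have "(K * t) ^ k \<le> K ^ k" using that K(1) by (intro power_mono) (auto simp: mult_left_le)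
    then have "M * (K * t) ^ k / fact k \<le> M * (inverse (fact k) * K ^ k)"
      using Mnn by (simp add: divide_simps mult_left_mono)
    then show ?thesis using bnd[OF that, of k] unfolding f_def by linarith
  qed
  have sm: "summable (\<lambda>k. M * (inverse (fact k) * K ^ k))"
    by (intro summable_mult summable_exp)
  have ul: "uniform_limit {0..1} (\<lambda>n t. \<Sum>i<n. f i t) (\<lambda>t. suminf (\<lambda>i. f i t)) sequentially"
    by (rule Weierstrass_m_test[OF fb sm])
  have tel: "(\<Sum>i<n. f i t) = P n t - x0" for n t
    unfolding f_def by (subst sum_lessThan_telescope) (simp add: P0)
  define x where "x t = x0 + suminf (\<lambda>i. f i t)" for t
  have ulP: "uniform_limit {0..1} P x sequentially"
  proof -
    have "uniform_limit {0..1} (\<lambda>n t. x0 + (\<Sum>i<n. f i t)) (\<lambda>t. x0 + suminf (\<lambda>i. f i t)) sequentially"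
      by (intro uniform_limit_intros ul)
    then show ?thesis unfolding x_def tel by simp
  qed
  have contx: "continuous_on {0..1} x"
    by (rule uniform_limit_theorem[OF always_eventually ulP]) (simp_all add: contP)
  have contFx: "continuous_on {0..1} (\<lambda>s. F s (x s))" by (rule cont_comp_F[OF cont contx])
  have inteq: "x t = x0 + integral {0..t} (\<lambda>s. F s (x s))" if t: "t \<in> {0..1}" for t
  proof -
    have t1: "t \<le> 1" "0 \<le> t" using t by auto
    have ulF: "uniform_limit {0..t} (\<lambda>n s. F s (P n s)) (\<lambda>s. F s (x s)) sequentially"
    proof (rule uniform_limitI)
      fix e :: real assume e: "e > 0"
      have "\<forall>\<^sub>F n in sequentially. \<forall>s\<in>{0..1}. dist (P n s) (x s) < e / K"
        using uniform_limitD[OF ulP, of "e / K"] e K(1) by simp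
      then show "\<forall>\<^sub>F n in sequentially. \<forall>s\<in>{0..t}. dist (F s (P n s)) (F s (x s)) < e"
      proof eventually_elim
        case (elim n)
        show ?case
        proof
          fix s assume s: "s \<in> {0..t}"
          then have s1: "s \<in> {0..1}" using t1 by auto
          have "dist (F s (P n s)) (F s (x s)) \<le> K * dist (P n s) (x s)"
            using lip[OF s1] by (simp add: dist_norm)
          also have "\<dots> < K * (e / K)" using elim s1 K(1) by (intro mult_strict_left_mono) auto
          finally show "dist (F s (P n s)) (F s (x s)) < e" using K(1) by simp
        qed
      qed
    qed
    have cF: "continuous_on {0..t} (\<lambda>s. F s (P n s))" for n
      by (rule continuous_on_subset[OF contF]) (use t1 in auto)
    obtain I J where I: "\<And>n. ((\<lambda>s. F s (P n s)) has_integral I n) {0..t}"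
      and J: "((\<lambda>s. F s (x s)) has_integral J) {0..t}" and IJ: "I \<longlonglongrightarrow> J"
      by (rule uniform_limit_integral[OF ulF cF trivial_limit_sequentially], rule that)
    have "(\<lambda>n. P (Suc n) t) \<longlonglongrightarrow> x0 + J"
    proof -
      have "(\<lambda>n. P (Suc n) t) = (\<lambda>n. x0 + I n)" using integral_unique[OF I] by (simp add: PS)
      then show ?thesis using tendsto_add[OF tendsto_const IJ] by simp
    qed
    moreover have "(\<lambda>n. P (Suc n) t) \<longlonglongrightarrow> x t"
    proof -
      have "(\<lambda>n. P n t) \<longlonglongrightarrow> x t"
        using tendsto_uniform_limitI[OF ulP t] .
      then show ?thesis by (rule LIMSEQ_Suc)
    qed
    ultimately have "x t = x0 + J" by (rule LIMSEQ_unique[rotated])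
    then show ?thesis using J by (simp add: integral_unique)
  qed
  define y where "y t = x0 + integral {0..t} (\<lambda>s. F s (x s))" for t
  have xy: "x t = y t" if "t \<in> {0..1}" for t using inteq[OF that] by (simp add: y_def)
  show ?thesis
  proof (intro exI[of _ y] conjI ballI)
    show "y 0 = x0" by (simp add: y_def)
    show "continuous_on {0..1} y"
    proof -
      have "continuous_on {0..1} x = continuous_on {0..1} y"
        by (rule continuous_on_cong[OF refl xy])
      then show ?thesis using contx by simp
    qed
    fix t :: real assume t: "t \<in> {0..1}"
    have "((\<lambda>u. integral {0..u} (\<lambda>s. F s (x s))) has_vector_derivative F t (x t)) (at t within {0..1})"
      by (rule integral_has_vector_derivative[OF contFx t])
    then have "(y has_vector_derivative F t (x t)) (at t within {0..1})"
      unfolding y_def by (intro derivative_eq_intros) auto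
    then show "(y has_vector_derivative F t (y t)) (at t within {0..1})"
      using xy[OF t] by simp
  qed
qed

lemma lin_ode_unique:
  fixes G :: "real \<Rightarrow> 'a::euclidean_space \<Rightarrow> 'a"
  assumes cont: "continuous_on ({0..1} \<times> UNIV) (\<lambda>p. G (fst p) (snd p))"
    and lin: "\<And>t. linear (G t)"
    and y: "continuous_on {0..1} y"
    and der: "\<And>t. 0 < t \<Longrightarrow> t < 1 \<Longrightarrow> (y has_vector_derivative G t (y t)) (at t)"
    and t1: "t1 \<in> {0..1}" "y t1 = 0" and t: "t \<in> {0..1}"
  shows "y t = 0"
proof -
  obtain K where K: "K > 0" "\<And>t z. t \<in> {0..1} \<Longrightarrow> norm (G t z) \<le> K * norm z"
    using lin_bound[OF cont lin] by blast
  define \<phi> where "\<phi> s = inner (y s) (y s)" for s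
  define \<phi>' where "\<phi>' s = 2 * inner (y s) (G s (y s))" for s
  have d: "(\<phi> has_real_derivative \<phi>' s) (at s)" if "0 < s" "s < 1" for s
  proof -
    have "(\<phi> has_vector_derivative (inner (y s) (G s (y s)) + inner (G s (y s)) (y s))) (at s)"
      unfolding \<phi>_def by (rule bounded_bilinear.has_vector_derivative[OF bounded_bilinear_inner der[OF that] der[OF that]])
    then show ?thesis
      by (simp add: \<phi>'_def has_real_derivative_iff_has_vector_derivative inner_commute)
  qed
  have bd: "\<bar>\<phi>' s\<bar> \<le> (2 * K) * \<phi> s" if "s \<in> {0..1}" for s
  proof -
    have "\<bar>inner (y s) (G s (y s))\<bar> \<le> norm (y s) * norm (G s (y s))" by (rule Cauchy_Schwarz_ineq2)
    also have "\<dots> \<le> norm (y s) * (K * norm (y s))" by (intro mult_left_mono K(2) that) simp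
    finally show ?thesis by (simp add: \<phi>'_def \<phi>_def power2_norm_eq_inner[symmetric] power2_eq_square abs_mult mult.assoc mult.left_commute)
  qed
  have cphi: "continuous_on {0..1} \<phi>" unfolding \<phi>_def by (intro continuous_intros y)
  have nn: "\<phi> s \<ge> 0" for s by (simp add: \<phi>_def)
  have "\<phi> t = 0"
  proof (cases "t1 \<le> t")
    case True
    show ?thesis
    proof (rule gronwall_fwd[of t1 1 \<phi> \<phi>' "2 * K"])
      show "continuous_on {t1..1} \<phi>" by (rule continuous_on_subset[OF cphi]) (use t1 in auto)
      fix s assume s: "t1 < s" "s < 1"
      then show "(\<phi> has_real_derivative \<phi>' s) (at s)" using t1 by (intro d) auto
      show "\<phi>' s \<le> 2 * K * \<phi> s" using bd[of s] s t1 by auto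
    qed (use t1 t True nn in \<open>auto simp: \<phi>_def\<close>)
  next
    case False
    show ?thesis
    proof (rule gronwall_bwd[of 0 t1 \<phi> \<phi>' "2 * K"])
      show "continuous_on {0..t1} \<phi>" by (rule continuous_on_subset[OF cphi]) (use t1 in auto)
      fix s assume s: "0 < s" "s < t1"
      then show "(\<phi> has_real_derivative \<phi>' s) (at s)" using t1 by (intro d) auto
      show "- (2 * K) * \<phi> s \<le> \<phi>' s" using bd[of s] s t1 by auto
    qed (use t1 t False nn in \<open>auto simp: \<phi>_def\<close>)
  qed
  then show ?thesis by (simp add: \<phi>_def)
qed

lemma dot_mv: "inner a ((A::real^'n^'m) *v b) = inner (transpose A *v a) b"
  by (simp add: dot_lmul_matrix)

lemma inner_rsharp: "inner \<zeta> (rsharp \<rho> \<xi>) = inner \<xi> (\<rho> *v \<zeta>)"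
  unfolding rsharp_def transpose_matrix_vector by (metis dot_lmul_matrix inner_commute)

lemma vec_eq_by_inner: "(\<And>\<zeta>. inner \<zeta> a = inner \<zeta> (b::'a::real_inner)) \<Longrightarrow> a = b"
  by (metis inner_diff_left inner_diff_right inner_eq_zero_iff right_minus_eq)

lemma mat_works_lin: "linear (f::real^'n \<Rightarrow> real^'m) \<Longrightarrow> matrix f *v x = f x"
  using matrix_vector_mul(2)[of f] by metis

lemma double_perp:
  fixes S :: "'a::euclidean_space set"
  assumes S: "subspace S" and h: "\<And>\<zeta>. (\<forall>s\<in>S. inner \<zeta> s = 0) \<Longrightarrow> inner \<zeta> y = 0"
  shows "y \<in> S"
proof -
  obtain a z where a: "a \<in> span S" and z: "\<And>w. w \<in> span S \<Longrightarrow> orthogonal z w" and y: "y = a + z"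
    by (rule orthogonal_subspace_decomp_exists[of S y], blast)
  have "\<forall>s\<in>S. inner z s = 0" using z span_base unfolding orthogonal_def by blast
  then have "inner z y = 0" by (rule h)
  moreover have "inner z a = 0" using z[OF a] by (simp add: orthogonal_def)
  ultimately have "inner z z = 0" using y by (simp add: inner_add_right)
  then have "z = 0" by simp
  moreover have sS: "span S = S" using S by (simp add: span_eq_iff)
  have "a \<in> S" using a by (simp only: sS)
  ultimately show ?thesis using y by simp
qed

lemma antisym_span:
  assumes "\<rho> \<in> wedge2 (UNIV :: (real^'n) set)"
  shows "transpose \<rho> = - \<rho>"
proof -
  have tz: "transpose (0::real^'n^'n) = 0" by (simp add: vec_eq_iff transpose_def)
  have ta: "transpose (A + B) = transpose A + transpose (B::real^'n^'n)" for A B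
    by (simp add: vec_eq_iff transpose_def)
  have sub: "subspace {A :: real^'n^'n. transpose A = - A}"
    unfolding subspace_def by (simp add: tz ta transpose_scalar)
  have to: "transpose (outer a b - outer b a) = - (outer a b - outer b a)" for a b :: "real^'n"
    by (simp add: vec_eq_iff transpose_def outer_def)
  have "{outer a b - outer b a | a b. a \<in> (UNIV :: (real^'n) set) \<and> b \<in> UNIV} \<subseteq> {A. transpose A = - A}"
    using to by blast
  from span_minimal[OF this sub] assms show ?thesis unfolding wedge2_def by auto
qed

locale dsetup =
  fixes br :: "real^'n \<Rightarrow> real^'n \<Rightarrow> real^'n"
    and hb :: "'l::finite \<Rightarrow> real^'n"
    and r :: "real^'l \<Rightarrow> real^'n^'n"
  assumes lie: "lie_algebra br"
    and injh: "inj hb"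
    and abel: "\<forall>i j. br (hb i) (hb j) = 0"
    and td: "tdrm br UNIV hb r"
    and sp: "splittable hb r"
begin

abbreviation "H \<equiv> hspace hb"

lemma bil: "bilinear br" using lie by (simp add: lie_algebra_def)
lemma bbil: "bounded_bilinear br" using bil bilinear_conv_bounded_bilinear by blast
lemma lin2: "linear (br x)" using bil by (simp add: bilinear_def)
lemma lin1: "linear (\<lambda>x. br x y)" using bil by (simp add: bilinear_def)
lemma br_anti: "br x y = - br y x"
proof -
  have "br (x + y) (x + y) = 0" using lie by (simp add: lie_algebra_def)
  moreover have "br x x = 0" "br y y = 0" using lie by (auto simp: lie_algebra_def)
  ultimately have "br x y + br y x = 0"
    by (simp add: bilinear_ladd[OF bil] bilinear_radd[OF bil] algebra_simps)
  then show ?thesis by (simp add: eq_neg_iff_add_eq_0)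
qed
lemma br_add1: "br (x + y) z = br x z + br y z" by (rule bilinear_ladd[OF bil])
lemma br_add2: "br x (y + z) = br x y + br x z" by (rule bilinear_radd[OF bil])
lemma br_scale1: "br (c *\<^sub>R x) y = c *\<^sub>R br x y" by (rule bilinear_lmul[OF bil])
lemma br_scale2: "br x (c *\<^sub>R y) = c *\<^sub>R br x y" by (rule bilinear_rmul[OF bil])
lemma br_zero1[simp]: "br 0 y = 0" by (rule bilinear_lzero[OF bil])
lemma br_zero2[simp]: "br x 0 = 0" by (rule bilinear_rzero[OF bil])
lemma br_neg1: "br (- x) y = - br x y" by (rule bilinear_lneg[OF bil])
lemma br_neg2: "br x (- y) = - br x y" by (rule bilinear_rneg[OF bil])
lemma br_diff1: "br (x - y) z = br x z - br y z" by (rule bilinear_lsub[OF bil])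
lemma br_diff2: "br x (y - z) = br x y - br x z" by (rule bilinear_rsub[OF bil])

lemma H_sub: "subspace H" unfolding hspace_def by simp

lemma hperp_iff: "\<xi> \<in> hperp hb \<longleftrightarrow> (\<forall>i. inner \<xi> (hb i) = 0)"
proof
  assume "\<xi> \<in> hperp hb" then show "\<forall>i. inner \<xi> (hb i) = 0"
    by (auto simp: hperp_def hspace_def span_base)
next
  assume a: "\<forall>i. inner \<xi> (hb i) = 0"
  have "span (range hb) \<subseteq> {x. inner \<xi> x = 0}"
    by (rule span_minimal[OF _ subspace_hyperplane]) (use a in auto)
  then show "\<xi> \<in> hperp hb" by (auto simp: hperp_def hspace_def)
qed

lemma hperp_sub: "subspace (hperp hb)"
  unfolding subspace_def hperp_def by (auto simp: inner_add_left)

lemma H_repr: assumes "y \<in> H" shows "\<exists>c. y = (\<Sum>i\<in>UNIV. c i *\<^sub>R hb i)"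
proof -
  have "y \<in> span (range hb)" using assms by (simp add: hspace_def)
  then obtain u where "y = (\<Sum>v\<in>range hb. u v *\<^sub>R v)"
    using span_finite[of "range hb"] by auto
  also have "\<dots> = (\<Sum>i\<in>UNIV. u (hb i) *\<^sub>R hb i)"
    by (subst sum.reindex) (use injh in \<open>auto simp: inj_on_def\<close>)
  finally show ?thesis by (intro exI[of _ "\<lambda>i. u (hb i)"])
qed

lemma H_sum: "(\<Sum>i\<in>UNIV. c i *\<^sub>R hb i) \<in> H"
  unfolding hspace_def by (intro span_sum span_scale span_base) auto

lemma hb_H: "hb i \<in> H" unfolding hspace_def by (simp add: span_base)

lemma abel_H: assumes "x \<in> H" "y \<in> H" shows "br x y = 0"
proof -
  have s1: "subspace {x. \<forall>i. br x (hb i) = 0}"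
    unfolding subspace_def by (auto simp: br_add1 br_scale1)
  have "range hb \<subseteq> {x. \<forall>i. br x (hb i) = 0}" using abel by auto
  from span_minimal[OF this s1] assms(1) have x: "\<forall>i. br x (hb i) = 0" by (auto simp: hspace_def)
  have s2: "subspace {y. br x y = 0}"
    unfolding subspace_def by (auto simp: br_add2 br_scale2)
  have "range hb \<subseteq> {y. br x y = 0}" using x by auto
  from span_minimal[OF this s2] assms(2) show ?thesis by (auto simp: hspace_def)
qed

lemma r_wedge: "r lam \<in> wedge2 UNIV" using td by (simp add: tdrm_def)
lemma r_anti: "transpose (r lam) = - r lam" by (rule antisym_span[OF r_wedge])
lemma neg_mv: "(- A) *v z = - ((A::real^'n^'m) *v z)"
  by (simp add: vec_eq_iff matrix_vector_mult_def sum_negf)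
lemma r_mv: "r lam *v z = - rsharp (r lam) z"
  unfolding rsharp_def r_anti neg_mv by simp

lemma bv_anti: "inner a (rsharp (r lam) b) = - inner b (rsharp (r lam) a)"
  unfolding inner_rsharp[of a] r_mv by simp

lemma ad2_hb: "ad2 br (hb i) (r lam) = 0" using td by (simp add: tdrm_def)

lemma ad2_pair:
  assumes "ad2 br x \<rho> = 0"
  shows "inner a (br x (\<rho> *v b)) + inner b (br x (transpose \<rho> *v a)) = 0"
proof -
  let ?M = "matrix (br x)"
  have "(?M ** \<rho> + \<rho> ** transpose ?M) *v b = 0" using assms by (simp add: ad2_def)
  then have "?M *v (\<rho> *v b) + \<rho> *v (transpose ?M *v b) = 0"
    by (simp only: matrix_vector_mult_add_rdistrib matrix_vector_mul_assoc[symmetric])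
  then have "inner a (?M *v (\<rho> *v b)) + inner a (\<rho> *v (transpose ?M *v b)) = 0"
    by (metis inner_add_right inner_zero_right)
  moreover have "inner a (\<rho> *v (transpose ?M *v b)) = inner b (br x (transpose \<rho> *v a))"
  proof -
    have "inner a (\<rho> *v (transpose ?M *v b)) = inner (transpose \<rho> *v a) (transpose ?M *v b)"
      by (rule dot_mv)
    also have "\<dots> = inner (transpose ?M *v b) (transpose \<rho> *v a)" by (rule inner_commute)
    also have "\<dots> = inner b (?M *v (transpose \<rho> *v a))"
      by (rule dot_mv[of b ?M "transpose \<rho> *v a", symmetric])
    also have "\<dots> = inner b (br x (transpose \<rho> *v a))" by (simp only: mat_works_lin[OF lin2])
    finally show ?thesis .
  qed
  ultimately show ?thesis by (simp add: mat_works_lin[OF lin2])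
qed

lemma inv_H:
  assumes "x \<in> H"
  shows "inner a (br x (rsharp (r lam) b)) = inner b (br x (rsharp (r lam) a))"
proof -
  have s: "subspace {x. \<forall>a b. inner a (br x (r lam *v b)) + inner b (br x (transpose (r lam) *v a)) = 0}"
    unfolding subspace_def
  proof (intro conjI ballI allI)
    fix x y assume x: "x \<in> {x. \<forall>a b. inner a (br x (r lam *v b)) + inner b (br x (transpose (r lam) *v a)) = 0}"
      and y: "y \<in> {x. \<forall>a b. inner a (br x (r lam *v b)) + inner b (br x (transpose (r lam) *v a)) = 0}"
    show "x + y \<in> {x. \<forall>a b. inner a (br x (r lam *v b)) + inner b (br x (transpose (r lam) *v a)) = 0}"
    proof (intro CollectI allI)
      fix a b
      have "inner a (br x (r lam *v b)) + inner b (br x (transpose (r lam) *v a)) = 0"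
        "inner a (br y (r lam *v b)) + inner b (br y (transpose (r lam) *v a)) = 0" using x y by auto
      then show "inner a (br (x + y) (r lam *v b)) + inner b (br (x + y) (transpose (r lam) *v a)) = 0"
        by (simp add: br_add1 inner_add_right algebra_simps)
    qed
  next
    fix c x assume x: "x \<in> {x. \<forall>a b. inner a (br x (r lam *v b)) + inner b (br x (transpose (r lam) *v a)) = 0}"
    show "c *\<^sub>R x \<in> {x. \<forall>a b. inner a (br x (r lam *v b)) + inner b (br x (transpose (r lam) *v a)) = 0}"
    proof (intro CollectI allI)
      fix a b
      have "inner a (br x (r lam *v b)) + inner b (br x (transpose (r lam) *v a)) = 0" using x by auto
      then have "c * (inner a (br x (r lam *v b)) + inner b (br x (transpose (r lam) *v a))) = 0" by simp
      then show "inner a (br (c *\<^sub>R x) (r lam *v b)) + inner b (br (c *\<^sub>R x) (transpose (r lam) *v a)) = 0"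
        by (simp add: br_scale1 algebra_simps)
    qed
  qed simp
  have "range hb \<subseteq> {x. \<forall>a b. inner a (br x (r lam *v b)) + inner b (br x (transpose (r lam) *v a)) = 0}"
    using ad2_pair[OF ad2_hb] by auto
  from span_minimal[OF this s] assms
  have "inner a (br x (r lam *v b)) + inner b (br x (transpose (r lam) *v a)) = 0"
    by (auto simp: hspace_def)
  then show ?thesis by (simp add: r_mv br_neg2 rsharp_def)
qed

end

lemma rsharp_add: "rsharp \<rho> (a + b) = rsharp \<rho> a + rsharp \<rho> b"
  by (simp add: rsharp_def matrix_vector_right_distrib)
lemma rsharp_scale: "rsharp \<rho> (c *\<^sub>R a) = c *\<^sub>R rsharp \<rho> a"
  unfolding rsharp_def using linear_scale[OF matrix_vector_mul_linear[of "transpose \<rho>"]] by simp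
lemma rsharp_0[simp]: "rsharp \<rho> 0 = 0" by (simp add: rsharp_def)
lemma rsharp_diff: "rsharp \<rho> (a - b) = rsharp \<rho> a - rsharp \<rho> b"
  unfolding rsharp_def using linear_diff[OF matrix_vector_mul_linear[of "transpose \<rho>"]] by simp
lemma rsharp_neg: "rsharp \<rho> (- a) = - rsharp \<rho> a"
  unfolding rsharp_def using linear_neg[OF matrix_vector_mul_linear[of "transpose \<rho>"]] by simp

context dsetup
begin

lemma split_ex: "\<exists>\<eta>. rsharp (r lam) \<eta> \<in> H \<and> (\<forall>i. inner \<eta> (hb i) = v $ i)"
proof -
  have "v \<in> restr_h hb ` {\<xi>. rsharp (r lam) \<xi> \<in> H}" using sp by (simp add: splittable_def)
  then obtain \<eta> where "rsharp (r lam) \<eta> \<in> H" "v = restr_h hb \<eta>" by auto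
  then show ?thesis by (intro exI[of _ \<eta>]) (simp add: restr_h_def)
qed

lemma g_sub: "subspace (g_lam hb r lam)"
  unfolding subspace_def g_lam_def
proof (intro conjI ballI allI)
  show "0 \<in> {x + rsharp (r lam) \<xi> |x \<xi>. x \<in> H \<and> \<xi> \<in> hperp hb}"
    by (intro CollectI exI[of _ 0]) (simp add: subspace_0[OF H_sub] subspace_0[OF hperp_sub])
next
  fix x y assume x: "x \<in> {x + rsharp (r lam) \<xi> |x \<xi>. x \<in> H \<and> \<xi> \<in> hperp hb}"
    and y: "y \<in> {x + rsharp (r lam) \<xi> |x \<xi>. x \<in> H \<and> \<xi> \<in> hperp hb}"
  then obtain a \<xi> b \<eta> where "x = a + rsharp (r lam) \<xi>" "y = b + rsharp (r lam) \<eta>"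
    "a \<in> H" "b \<in> H" "\<xi> \<in> hperp hb" "\<eta> \<in> hperp hb" by auto
  then show "x + y \<in> {x + rsharp (r lam) \<xi> |x \<xi>. x \<in> H \<and> \<xi> \<in> hperp hb}"
    by (intro CollectI exI[of _ "a + b"] exI[of _ "\<xi> + \<eta>"])
       (simp add: rsharp_add subspace_add[OF H_sub] subspace_add[OF hperp_sub] algebra_simps)
next
  fix c x assume x: "x \<in> {x + rsharp (r lam) \<xi> |x \<xi>. x \<in> H \<and> \<xi> \<in> hperp hb}"
  then obtain a \<xi> where "x = a + rsharp (r lam) \<xi>" "a \<in> H" "\<xi> \<in> hperp hb" by auto
  then show "c *\<^sub>R x \<in> {x + rsharp (r lam) \<xi> |x \<xi>. x \<in> H \<and> \<xi> \<in> hperp hb}"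
    by (intro CollectI exI[of _ "c *\<^sub>R a"] exI[of _ "c *\<^sub>R \<xi>"])
       (simp add: rsharp_scale subspace_scale[OF H_sub] subspace_scale[OF hperp_sub] scaleR_right_distrib)
qed

lemma H_g: "x \<in> H \<Longrightarrow> x \<in> g_lam hb r lam"
  unfolding g_lam_def by (intro CollectI exI[of _ x] exI[of _ 0]) (simp add: subspace_0[OF hperp_sub])

lemma perp_g: "\<xi> \<in> hperp hb \<Longrightarrow> rsharp (r lam) \<xi> \<in> g_lam hb r lam"
  unfolding g_lam_def by (intro CollectI exI[of _ 0] exI[of _ \<xi>]) (simp add: subspace_0[OF H_sub])

lemma g_perp:
  "(\<forall>y\<in>g_lam hb r lam. inner \<zeta> y = 0) \<longleftrightarrow> (\<zeta> \<in> hperp hb \<and> r lam *v \<zeta> = 0)"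
proof
  assume a: "\<forall>y\<in>g_lam hb r lam. inner \<zeta> y = 0"
  have z: "\<zeta> \<in> hperp hb" unfolding hperp_def using a H_g by auto
  have "r lam *v \<zeta> \<in> H"
  proof (rule double_perp[OF H_sub])
    fix \<xi> assume "\<forall>s\<in>H. inner \<xi> s = 0"
    then have "\<xi> \<in> hperp hb" by (simp add: hperp_def)
    then have "inner \<zeta> (rsharp (r lam) \<xi>) = 0" using a perp_g by auto
    then show "inner \<xi> (r lam *v \<zeta>) = 0" by (simp add: inner_rsharp)
  qed
  then obtain c where c: "r lam *v \<zeta> = (\<Sum>i\<in>UNIV. c i *\<^sub>R hb i)" using H_repr by blast
  obtain \<eta> where \<eta>: "rsharp (r lam) \<eta> \<in> H" "\<forall>i. inner \<eta> (hb i) = (\<chi> i. c i) $ i"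
    using split_ex by blast
  have "inner \<eta> (r lam *v \<zeta>) = inner \<zeta> (rsharp (r lam) \<eta>)" by (simp add: inner_rsharp)
  also have "\<dots> = 0" using z \<eta>(1) by (simp add: hperp_def)
  finally have "inner \<eta> (r lam *v \<zeta>) = 0" .
  moreover have "inner \<eta> (r lam *v \<zeta>) = (\<Sum>i\<in>UNIV. c i * c i)"
    unfolding c using \<eta>(2) by (simp add: inner_sum_right)
  ultimately have "(\<Sum>i\<in>UNIV. c i * c i) = 0" by simp
  then have "\<forall>i. c i * c i = 0" using sum_nonneg_eq_0_iff[of UNIV "\<lambda>i. c i * c i"] by simp
  then have "r lam *v \<zeta> = 0" unfolding c by simp
  with z show "\<zeta> \<in> hperp hb \<and> r lam *v \<zeta> = 0" by simp
next
  assume a: "\<zeta> \<in> hperp hb \<and> r lam *v \<zeta> = 0"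
  show "\<forall>y\<in>g_lam hb r lam. inner \<zeta> y = 0"
  proof
    fix y assume "y \<in> g_lam hb r lam"
    then obtain x \<xi> where "y = x + rsharp (r lam) \<xi>" "x \<in> H" by (auto simp: g_lam_def)
    then show "inner \<zeta> y = 0" using a by (simp add: inner_add_right inner_rsharp hperp_def)
  qed
qed

lemma g_mem:
  assumes "\<And>\<zeta>. \<zeta> \<in> hperp hb \<Longrightarrow> r lam *v \<zeta> = 0 \<Longrightarrow> inner \<zeta> y = 0"
  shows "y \<in> g_lam hb r lam"
  by (rule double_perp[OF g_sub]) (use assms g_perp in blast)

lemma g_inner0: "y \<in> g_lam hb r lam \<Longrightarrow> \<zeta> \<in> hperp hb \<Longrightarrow> r lam *v \<zeta> = 0 \<Longrightarrow> inner \<zeta> y = 0"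
  using g_perp by blast

lemma rsharp_in_g: "rsharp (r lam) \<xi> \<in> g_lam hb r lam"
proof -
  obtain \<eta> where \<eta>: "rsharp (r lam) \<eta> \<in> H" "\<forall>i. inner \<eta> (hb i) = (\<chi> i. inner \<xi> (hb i)) $ i"
    using split_ex by blast
  have "\<xi> - \<eta> \<in> hperp hb" using \<eta>(2) by (simp add: hperp_iff inner_diff_left)
  then have "rsharp (r lam) \<eta> + rsharp (r lam) (\<xi> - \<eta>) \<in> g_lam hb r lam"
    using \<eta>(1) unfolding g_lam_def by blast
  then show ?thesis by (simp add: rsharp_diff)
qed

lemma cdy: "cdybe br hb r" using td by (simp add: tdrm_def)

lemma cdy_inst:
  "(\<Sum>i\<in>UNIV. (inner \<xi> (hb i)) * bv (pderiv_r r i lam) \<eta> \<zeta>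
               + (inner \<eta> (hb i)) * bv (pderiv_r r i lam) \<zeta> \<xi>
               + (inner \<zeta> (hb i)) * bv (pderiv_r r i lam) \<xi> \<eta>)
     + (inner \<xi> (br (rsharp (r lam) \<eta>) (rsharp (r lam) \<zeta>))
        + inner \<eta> (br (rsharp (r lam) \<zeta>) (rsharp (r lam) \<xi>))
        + inner \<zeta> (br (rsharp (r lam) \<xi>) (rsharp (r lam) \<eta>))) = 0"
  using cdy unfolding cdybe_def by blast

lemma rsharp_ker: "r lam *v \<zeta> = 0 \<Longrightarrow> rsharp (r lam) \<zeta> = 0"
  using r_mv[of lam \<zeta>] by simp

lemma g_subalg: "lie_subalgebra br (g_lam hb r lam)"
  unfolding lie_subalgebra_def
proof (intro conjI g_sub ballI)
  fix x y assume x: "x \<in> g_lam hb r lam" and y: "y \<in> g_lam hb r lam"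
  then obtain a \<xi> b \<eta> where xy: "x = a + rsharp (r lam) \<xi>" "y = b + rsharp (r lam) \<eta>"
    and ab: "a \<in> H" "b \<in> H" and \<xi>\<eta>: "\<xi> \<in> hperp hb" "\<eta> \<in> hperp hb" by (auto simp: g_lam_def)
  show "br x y \<in> g_lam hb r lam"
  proof (rule g_mem)
    fix \<zeta> assume z: "\<zeta> \<in> hperp hb" and rz: "r lam *v \<zeta> = 0"
    have rz': "rsharp (r lam) \<zeta> = 0" by (rule rsharp_ker[OF rz])
    have t1: "br a b = 0" by (rule abel_H[OF ab])
    have t2: "inner \<zeta> (br a (rsharp (r lam) \<eta>)) = 0"
      using inv_H[OF ab(1), of \<zeta> lam \<eta>] rz' by simp
    have t3: "inner \<zeta> (br (rsharp (r lam) \<xi>) b) = 0"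
      using inv_H[OF ab(2), of \<zeta> lam \<xi>] rz' br_anti[of "rsharp (r lam) \<xi>" b] by simp
    have t4: "inner \<zeta> (br (rsharp (r lam) \<xi>) (rsharp (r lam) \<eta>)) = 0"
      using cdy_inst[of \<zeta> lam \<xi> \<eta>] z \<xi>\<eta> rz' by (simp add: hperp_iff)
    show "inner \<zeta> (br x y) = 0"
      unfolding xy by (simp add: br_add1 br_add2 inner_add_right t1 t2 t3 t4)
  qed
qed

end

definition adT :: "(real^'n \<Rightarrow> real^'n \<Rightarrow> real^'n) \<Rightarrow> real^'n \<Rightarrow> real^'n \<Rightarrow> real^'n" where
  "adT br y \<zeta> = (\<chi> k. inner \<zeta> (br y (axis k 1)))"

lemma rsharp_lin1: "linear (\<lambda>A. rsharp A \<xi>)"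
  by (rule linearI) (simp_all add: rsharp_def vec_eq_iff matrix_vector_mult_def transpose_def
      sum.distrib algebra_simps sum_distrib_left)

context dsetup
begin

lemma adT_inner: "inner (adT br y \<zeta>) z = inner \<zeta> (br y z)"
proof -
  have "inner (adT br y \<zeta>) z = (\<Sum>k\<in>UNIV. inner \<zeta> (br y (axis k 1)) * z $ k)"
    by (simp add: adT_def inner_vec_def)
  also have "\<dots> = inner \<zeta> (\<Sum>k\<in>UNIV. z $ k *\<^sub>R br y (axis k 1))"
    by (simp add: inner_sum_right mult.commute)
  also have "(\<Sum>k\<in>UNIV. z $ k *\<^sub>R br y (axis k 1)) = br y (\<Sum>k\<in>UNIV. z $ k *\<^sub>R axis k 1)"
    by (simp add: linear_sum[OF lin2] linear_scale[OF lin2])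
  also have "(\<Sum>k\<in>UNIV. z $ k *\<^sub>R axis k 1) = z"
    using basis_expansion[of z] by (simp add: scalar_mult_eq_scaleR)
  finally show ?thesis .
qed

lemma adT_add1: "adT br (a + b) z = adT br a z + adT br b z"
  by (simp add: adT_def vec_eq_iff br_add1 inner_add_right)
lemma adT_add2: "adT br a (y + z) = adT br a y + adT br a z"
  by (simp add: adT_def vec_eq_iff inner_add_left)
lemma adT_scale1: "adT br (c *\<^sub>R a) z = c *\<^sub>R adT br a z"
  by (simp add: adT_def vec_eq_iff br_scale1)
lemma adT_scale2: "adT br a (c *\<^sub>R z) = c *\<^sub>R adT br a z"
  by (simp add: adT_def vec_eq_iff)

lemma hperp_pres:
  assumes "w \<in> H"
  shows "inner (- adT br (rsharp (r lam) \<xi>) \<xi>v + adT br (rsharp (r lam) \<xi>v) \<xi> + adT br w \<xi>v) (hb j) = 0"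
proof -
  have "inner \<xi>v (br w (hb j)) = 0" using abel_H[OF assms hb_H] by simp
  moreover have "inner \<xi>v (br (rsharp (r lam) \<xi>) (hb j)) = - inner \<xi> (br (hb j) (rsharp (r lam) \<xi>v))"
    using inv_H[OF hb_H[of j], of \<xi>v lam \<xi>] br_anti[of "rsharp (r lam) \<xi>" "hb j"] by simp
  moreover have "inner \<xi> (br (rsharp (r lam) \<xi>v) (hb j)) = - inner \<xi> (br (hb j) (rsharp (r lam) \<xi>v))"
    using br_anti[of "rsharp (r lam) \<xi>v" "hb j"] by simp
  ultimately show ?thesis by (simp add: inner_add_left inner_diff_left adT_inner)
qed

lemma main_identity:
  assumes w: "w \<in> H" and \<xi>: "\<xi> \<in> hperp hb" and hv: "\<And>i. inner \<xi>v (hb i) = v $ i"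
  shows "- (- (\<Sum>i\<in>UNIV. inner \<xi>v (pderiv_r r i lam *v \<xi>) *\<^sub>R hb i))
         + rsharp (\<Sum>i\<in>UNIV. v $ i *\<^sub>R pderiv_r r i lam) \<xi>
         + rsharp (r lam) (- adT br (rsharp (r lam) \<xi>) \<xi>v + adT br (rsharp (r lam) \<xi>v) \<xi> + adT br w \<xi>v)
       = - br (rsharp (r lam) \<xi>v) (- w + rsharp (r lam) \<xi>)"
proof (rule vec_eq_by_inner)
  fix \<zeta>
  let ?r = "rsharp (r lam)"
  let ?D = "\<lambda>i. pderiv_r r i lam"
  have e1: "inner \<zeta> (- (- (\<Sum>i\<in>UNIV. inner \<xi>v (?D i *v \<xi>) *\<^sub>R hb i)))
      = (\<Sum>i\<in>UNIV. inner \<zeta> (hb i) * bv (?D i) \<xi>v \<xi>)"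
    by (simp add: inner_sum_right bv_def mult.commute)
  have e2: "inner \<zeta> (rsharp (\<Sum>i\<in>UNIV. v $ i *\<^sub>R ?D i) \<xi>) = (\<Sum>i\<in>UNIV. inner \<xi>v (hb i) * bv (?D i) \<xi> \<zeta>)"
    by (simp add: linear_sum[OF rsharp_lin1] linear_scale[OF rsharp_lin1] inner_sum_right inner_rsharp bv_def hv)
  have e3: "inner \<zeta> (?r (- adT br (?r \<xi>) \<xi>v + adT br (?r \<xi>v) \<xi> + adT br w \<xi>v))
      = inner \<xi>v (br (?r \<xi>) (?r \<zeta>)) - inner \<xi> (br (?r \<xi>v) (?r \<zeta>)) - inner \<xi>v (br w (?r \<zeta>))"
    unfolding bv_anti[of \<zeta> lam] by (simp add: inner_add_left inner_diff_left adT_inner)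
  have cd: "(\<Sum>i\<in>UNIV. inner \<xi>v (hb i) * bv (?D i) \<xi> \<zeta> + inner \<zeta> (hb i) * bv (?D i) \<xi>v \<xi>)
     + (inner \<xi>v (br (?r \<xi>) (?r \<zeta>)) + inner \<xi> (br (?r \<zeta>) (?r \<xi>v)) + inner \<zeta> (br (?r \<xi>v) (?r \<xi>))) = 0"
    using cdy_inst[of \<xi>v lam \<xi> \<zeta>] \<xi> by (simp add: hperp_iff)
  have inv: "inner \<xi>v (br w (?r \<zeta>)) = inner \<zeta> (br w (?r \<xi>v))" by (rule inv_H[OF w])
  have an1: "inner \<xi> (br (?r \<zeta>) (?r \<xi>v)) = - inner \<xi> (br (?r \<xi>v) (?r \<zeta>))"
    using br_anti[of "?r \<zeta>" "?r \<xi>v"] by simp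
  have an2: "inner \<zeta> (br w (?r \<xi>v)) = - inner \<zeta> (br (?r \<xi>v) w)"
    using br_anti[of w "?r \<xi>v"] by simp
  have rhs: "inner \<zeta> (- br (?r \<xi>v) (- w + ?r \<xi>)) = inner \<zeta> (br (?r \<xi>v) w) - inner \<zeta> (br (?r \<xi>v) (?r \<xi>))"
    by (simp add: br_add2 br_diff2 br_neg2 inner_add_right inner_diff_right)
  show "inner \<zeta> (- (- (\<Sum>i\<in>UNIV. inner \<xi>v (?D i *v \<xi>) *\<^sub>R hb i)) + rsharp (\<Sum>i\<in>UNIV. v $ i *\<^sub>R ?D i) \<xi>
         + ?r (- adT br (?r \<xi>) \<xi>v + adT br (?r \<xi>v) \<xi> + adT br w \<xi>v))
      = inner \<zeta> (- br (?r \<xi>v) (- w + ?r \<xi>))"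
    unfolding inner_add_right e1 e2 e3 rhs
    using cd inv an1 an2 by (simp add: sum.distrib algebra_simps)
qed

end

lemma bb_mv: "bounded_bilinear (\<lambda>(A::real^'n^'m) (x::real^'n). A *v x)"
proof -
  have "bilinear (\<lambda>(A::real^'n^'m) (x::real^'n). A *v x)"
    unfolding bilinear_def
  proof (intro conjI allI)
    fix A :: "real^'n^'m" show "linear (\<lambda>x. A *v x)" by simp
  next
    fix x :: "real^'n" show "linear (\<lambda>A::real^'n^'m. A *v x)"
      by (rule linearI) (simp_all add: vec_eq_iff matrix_vector_mult_def sum.distrib algebra_simps sum_distrib_left)
  qed
  then show ?thesis using bilinear_conv_bounded_bilinear by blast
qed

lemma bl_transpose: "bounded_linear (transpose :: real^'n^'m \<Rightarrow> real^'m^'n)"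
proof -
  have "linear (transpose :: real^'n^'m \<Rightarrow> real^'m^'n)"
    by (rule linearI) (simp_all add: vec_eq_iff transpose_def)
  then show ?thesis using linear_conv_bounded_linear by blast
qed

lemma cont_rsharp[continuous_intros]:
  assumes "continuous_on S A" "continuous_on S x"
  shows "continuous_on S (\<lambda>t. rsharp (A t) (x t))"
proof -
  have "continuous_on S (\<lambda>t. transpose (A t))" by (rule bounded_linear.continuous_on[OF bl_transpose assms(1)])
  from bounded_bilinear.continuous_on[OF bb_mv this assms(2)] show ?thesis unfolding rsharp_def by simp
qed

lemma cont_mv[continuous_intros]:
  assumes "continuous_on S A" "continuous_on S x"
  shows "continuous_on S (\<lambda>t. (A t :: real^'n^'m) *v x t)"
  using bounded_bilinear.continuous_on[OF bb_mv assms] by simp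

context dsetup
begin

lemma bb_adT: "bounded_bilinear (adT br)"
proof -
  have "bilinear (adT br)" unfolding bilinear_def
    by (intro conjI allI linearI) (simp_all add: adT_add1 adT_add2 adT_scale1 adT_scale2)
  then show ?thesis using bilinear_conv_bounded_bilinear by blast
qed

lemma cont_adT[continuous_intros]:
  assumes "continuous_on S a" "continuous_on S x"
  shows "continuous_on S (\<lambda>t. adT br (a t) (x t))"
  by (rule bounded_bilinear.continuous_on[OF bb_adT]) (rule assms)+

lemma cont_br[continuous_intros]:
  assumes "continuous_on S a" "continuous_on S x"
  shows "continuous_on S (\<lambda>t. br (a t) (x t))"
  by (rule bounded_bilinear.continuous_on[OF bbil]) (rule assms)+

lemma smooth: "smooth_map r" using td by (simp add: tdrm_def)

lemma r_diff: "r differentiable (at x)" and pd_diff: "pderiv_r r i differentiable (at x)"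
proof -
  obtain S where S: "r \<in> S" "\<And>g. g \<in> S \<Longrightarrow> (\<forall>x. g differentiable (at x)) \<and>
      (\<forall>i. (\<lambda>x. frechet_derivative g (at x) (axis i 1)) \<in> S)"
    using smooth unfolding smooth_map_def by blast
  show "r differentiable (at x)" using S by blast
  have "pderiv_r r i \<in> S" using S unfolding pderiv_r_def[abs_def] by blast
  then show "pderiv_r r i differentiable (at x)" using S by blast
qed

lemma r_cont: "continuous_on UNIV r"
  using r_diff by (simp add: differentiable_imp_continuous_on differentiable_on_def differentiable_at_withinI)
lemma pd_cont: "continuous_on UNIV (pderiv_r r i)"
  using pd_diff by (simp add: differentiable_imp_continuous_on differentiable_on_def differentiable_at_withinI)

lemma path_cont: "continuous_on S (\<lambda>t. r (l0 + t *\<^sub>R v))"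
  by (rule continuous_on_compose2[OF r_cont]) (auto intro!: continuous_intros)
lemma pd_path_cont: "continuous_on S (\<lambda>t. pderiv_r r i (l0 + t *\<^sub>R v))"
  by (rule continuous_on_compose2[OF pd_cont]) (auto intro!: continuous_intros)

lemma path_deriv:
  "((\<lambda>t. r (l0 + t *\<^sub>R v)) has_vector_derivative (\<Sum>i\<in>UNIV. v $ i *\<^sub>R pderiv_r r i (l0 + t *\<^sub>R v))) (at t)"
proof -
  let ?p = "l0 + t *\<^sub>R v"
  let ?D = "frechet_derivative r (at ?p)"
  have d: "(r has_derivative ?D) (at ?p)" using r_diff frechet_derivative_works by blast
  have bl: "bounded_linear ?D" using has_derivative_bounded_linear[OF d] .
  have f: "((\<lambda>t. l0 + t *\<^sub>R v) has_derivative (\<lambda>h. h *\<^sub>R v)) (at t)"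
    by (auto intro!: derivative_eq_intros)
  have "((r \<circ> (\<lambda>t. l0 + t *\<^sub>R v)) has_derivative (?D \<circ> (\<lambda>h. h *\<^sub>R v))) (at t)"
    by (rule diff_chain_at[OF f]) (use d in simp)
  moreover have "(?D \<circ> (\<lambda>h. h *\<^sub>R v)) = (\<lambda>h. h *\<^sub>R ?D v)"
    by (auto simp: o_def linear_scale[OF bounded_linear.linear[OF bl]])
  ultimately have "((\<lambda>t. r (l0 + t *\<^sub>R v)) has_vector_derivative ?D v) (at t)"
    by (simp add: has_vector_derivative_def o_def)
  moreover have "?D v = (\<Sum>i\<in>UNIV. v $ i *\<^sub>R pderiv_r r i ?p)"
  proof -
    have "v = (\<Sum>i\<in>UNIV. v $ i *\<^sub>R axis i 1)" using basis_expansion[of v] by (simp add: scalar_mult_eq_scaleR)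
    then have "?D v = ?D (\<Sum>i\<in>UNIV. v $ i *\<^sub>R axis i 1)" by simp
    also have "\<dots> = (\<Sum>i\<in>UNIV. v $ i *\<^sub>R ?D (axis i 1))"
      by (simp add: linear_sum[OF bounded_linear.linear[OF bl]] linear_scale[OF bounded_linear.linear[OF bl]])
    finally show ?thesis by (simp add: pderiv_r_def)
  qed
  ultimately show ?thesis by simp
qed

definition Fo :: "real^'l \<Rightarrow> real^'l \<Rightarrow> real^'n \<Rightarrow> real \<Rightarrow> ((real^'n) \<times> (real^'n)) \<Rightarrow> ((real^'n) \<times> (real^'n))" where
  "Fo l0 v \<xi>v t p = (- (\<Sum>i\<in>UNIV. inner \<xi>v (pderiv_r r i (l0 + t *\<^sub>R v) *v snd p) *\<^sub>R hb i),
     - adT br (rsharp (r (l0 + t *\<^sub>R v)) (snd p)) \<xi>v + adT br (rsharp (r (l0 + t *\<^sub>R v)) \<xi>v) (snd p)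
       + adT br (fst p) \<xi>v)"

lemma Fo_linear: "linear (Fo l0 v \<xi>v t)"
proof (rule linearI)
  fix p q :: "(real^'n) \<times> (real^'n)"
  show "Fo l0 v \<xi>v t (p + q) = Fo l0 v \<xi>v t p + Fo l0 v \<xi>v t q"
    by (simp add: Fo_def matrix_vector_right_distrib inner_add_right scaleR_add_left sum.distrib
        rsharp_add adT_add1 adT_add2 algebra_simps)
next
  fix c :: real and p :: "(real^'n) \<times> (real^'n)"
  show "Fo l0 v \<xi>v t (c *\<^sub>R p) = c *\<^sub>R Fo l0 v \<xi>v t p"
    by (simp add: Fo_def rsharp_scale adT_scale1 adT_scale2 scaleR_right_distrib scaleR_sum_right
        linear_scale[OF matrix_vector_mul_linear] scaleR_diff_right)
qed

lemma Fo_cont: "continuous_on ({0..1} \<times> UNIV) (\<lambda>q. Fo l0 v \<xi>v (fst q) (snd q))"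
proof -
  have c1: "continuous_on ({0..1} \<times> UNIV) (\<lambda>q::real \<times> ((real^'n) \<times> (real^'n)). r (l0 + fst q *\<^sub>R v))"
    by (rule continuous_on_compose2[OF r_cont]) (auto intro!: continuous_intros)
  have c2: "continuous_on ({0..1} \<times> UNIV) (\<lambda>q::real \<times> ((real^'n) \<times> (real^'n)). pderiv_r r i (l0 + fst q *\<^sub>R v))" for i
    by (rule continuous_on_compose2[OF pd_cont]) (auto intro!: continuous_intros)
  show ?thesis unfolding Fo_def
    by (intro continuous_intros c1 c2)
qed

end

lemma bb_rsharp: "bounded_bilinear rsharp"
proof -
  have "bilinear (rsharp :: real^'n^'n \<Rightarrow> real^'n \<Rightarrow> real^'n)" unfolding bilinear_def
  proof (intro conjI allI)
    fix A :: "real^'n^'n" show "linear (rsharp A)" unfolding rsharp_def[abs_def] by simp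
  next
    fix x :: "real^'n" show "linear (\<lambda>A::real^'n^'n. rsharp A x)" by (rule rsharp_lin1)
  qed
  then show ?thesis using bilinear_conv_bounded_bilinear by blast
qed

context dsetup
begin

lemma transport:
  assumes hv: "\<And>i. inner \<xi>v (hb i) = v $ i" and x0: "x0 \<in> g_lam hb r l0"
  shows "\<exists>x. x 0 = x0 \<and> continuous_on {0..1} x \<and> (\<forall>t\<in>{0..1}. x t \<in> g_lam hb r (l0 + t *\<^sub>R v)) \<and>
     (\<forall>t. 0 < t \<longrightarrow> t < 1 \<longrightarrow> (x has_vector_derivative - br (rsharp (r (l0 + t *\<^sub>R v)) \<xi>v) (x t)) (at t))"
proof -
  obtain a \<xi>0 where x0e: "x0 = a + rsharp (r l0) \<xi>0" and a: "a \<in> H" and \<xi>0: "\<xi>0 \<in> hperp hb"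
    using x0 by (auto simp: g_lam_def)
  obtain p where p0: "p 0 = (- a, \<xi>0)" and pc: "continuous_on {0..1} p"
    and pdw: "\<forall>t\<in>{0..1}. (p has_vector_derivative Fo l0 v \<xi>v t (p t)) (at t within {0..1})"
    using picard_linear[OF Fo_cont[of l0 v \<xi>v] Fo_linear[of l0 v \<xi>v], of "(- a, \<xi>0)"] by blast
  have pd: "(p has_vector_derivative Fo l0 v \<xi>v t (p t)) (at t)" if "0 < t" "t < 1" for t
  proof -
    have "t \<in> interior {0..1::real}" using that by simp
    then have e: "at t within {0..1} = at t" by (rule at_within_interior)
    have "t \<in> {0..1}" using that by auto
    then have "(p has_vector_derivative Fo l0 v \<xi>v t (p t)) (at t within {0..1})" using pdw by blast
    then show ?thesis by (simp only: e)
  qed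
  have fd: "((\<lambda>t. fst (p t)) has_vector_derivative fst (Fo l0 v \<xi>v t (p t))) (at t)" if "0 < t" "t < 1" for t
    by (rule bounded_linear.has_vector_derivative[OF bounded_linear_fst pd[OF that]])
  have sd: "((\<lambda>t. snd (p t)) has_vector_derivative snd (Fo l0 v \<xi>v t (p t))) (at t)" if "0 < t" "t < 1" for t
    by (rule bounded_linear.has_vector_derivative[OF bounded_linear_snd pd[OF that]])
  have fc: "continuous_on {0..1} (\<lambda>t. fst (p t))" by (intro continuous_intros pc)
  have sc: "continuous_on {0..1} (\<lambda>t. snd (p t))" by (intro continuous_intros pc)
  have const: "f t = f 0" if t: "t \<in> {0..1}" and cf: "continuous_on {0..1} f"
      and df: "\<And>s. 0 < s \<Longrightarrow> s < 1 \<Longrightarrow> (f has_real_derivative 0) (at s)" for f :: "real \<Rightarrow> real" and t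
  proof (cases "t = 0")
    case False
    then have "0 < t" using t by auto
    show ?thesis
      by (rule DERIV_isconst_end[OF \<open>0 < t\<close>]) (use t in \<open>auto intro: continuous_on_subset[OF cf] df\<close>)
  qed simp
  have fH: "fst (p t) \<in> H" if t: "t \<in> {0..1}" for t
  proof (rule double_perp[OF H_sub])
    fix \<zeta> assume z: "\<forall>s\<in>H. inner \<zeta> s = 0"
    then have zi: "\<forall>i. inner \<zeta> (hb i) = 0" using hb_H by blast
    have "inner \<zeta> (fst (p t)) = inner \<zeta> (fst (p 0))"
    proof (rule const[OF t, where f = "\<lambda>t. inner \<zeta> (fst (p t))"])
      show "continuous_on {0..1} (\<lambda>t. inner \<zeta> (fst (p t)))" by (intro continuous_intros fc)
      fix s :: real assume s: "0 < s" "s < 1"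
      have "((\<lambda>t. inner \<zeta> (fst (p t))) has_vector_derivative inner \<zeta> (fst (Fo l0 v \<xi>v s (p s)))) (at s)"
        by (rule bounded_linear.has_vector_derivative[OF bounded_linear_inner_right fd[OF s]])
      moreover have "inner \<zeta> (fst (Fo l0 v \<xi>v s (p s))) = 0"
        by (simp add: Fo_def inner_sum_right zi)
      ultimately show "((\<lambda>t. inner \<zeta> (fst (p t))) has_real_derivative 0) (at s)"
        by (simp add: has_real_derivative_iff_has_vector_derivative)
    qed
    also have "\<dots> = 0" using z a by (simp add: p0)
    finally show "inner \<zeta> (fst (p t)) = 0" .
  qed
  have sP: "snd (p t) \<in> hperp hb" if t: "t \<in> {0..1}" for t
    unfolding hperp_iff
  proof
    fix j
    have "inner (snd (p t)) (hb j) = inner (snd (p 0)) (hb j)"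
    proof (rule const[OF t, where f = "\<lambda>t. inner (snd (p t)) (hb j)"])
      show "continuous_on {0..1} (\<lambda>t. inner (snd (p t)) (hb j))" by (intro continuous_intros sc)
      fix s :: real assume s: "0 < s" "s < 1"
      have "((\<lambda>t. inner (snd (p t)) (hb j)) has_vector_derivative inner (snd (Fo l0 v \<xi>v s (p s))) (hb j)) (at s)"
        by (rule bounded_linear.has_vector_derivative[OF bounded_linear_inner_left sd[OF s]])
      moreover have "inner (snd (Fo l0 v \<xi>v s (p s))) (hb j) = 0"
        unfolding Fo_def snd_conv by (rule hperp_pres[OF fH]) (use s in auto)
      ultimately show "((\<lambda>t. inner (snd (p t)) (hb j)) has_real_derivative 0) (at s)"
        by (simp add: has_real_derivative_iff_has_vector_derivative)
    qed
    also have "\<dots> = 0" using \<xi>0 by (simp add: p0 hperp_iff)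
    finally show "inner (snd (p t)) (hb j) = 0" .
  qed
  define x where "x t = - fst (p t) + rsharp (r (l0 + t *\<^sub>R v)) (snd (p t))" for t
  show ?thesis
  proof (intro exI[of _ x] conjI ballI allI impI)
    show "x 0 = x0" by (simp add: x_def p0 x0e)
    show "continuous_on {0..1} x" unfolding x_def by (intro continuous_intros fc sc path_cont)
    fix t :: real assume t: "t \<in> {0..1}"
    have "- fst (p t) \<in> H" using fH[OF t] subspace_neg[OF H_sub] by blast
    then show "x t \<in> g_lam hb r (l0 + t *\<^sub>R v)" unfolding x_def g_lam_def using sP[OF t] by blast
  next
    fix t :: real assume t: "0 < t" "t < 1"
    let ?\<rho> = "r (l0 + t *\<^sub>R v)"
    have d: "(x has_vector_derivative (- fst (Fo l0 v \<xi>v t (p t)) +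
        (rsharp ?\<rho> (snd (Fo l0 v \<xi>v t (p t))) + rsharp (\<Sum>i\<in>UNIV. v $ i *\<^sub>R pderiv_r r i (l0 + t *\<^sub>R v)) (snd (p t))))) (at t)"
      unfolding x_def
      by (intro has_vector_derivative_add has_vector_derivative_minus fd[OF t]
          bounded_bilinear.has_vector_derivative[OF bb_rsharp path_deriv sd[OF t]])
    have "- fst (Fo l0 v \<xi>v t (p t)) +
        (rsharp ?\<rho> (snd (Fo l0 v \<xi>v t (p t))) + rsharp (\<Sum>i\<in>UNIV. v $ i *\<^sub>R pderiv_r r i (l0 + t *\<^sub>R v)) (snd (p t)))
        = - br (rsharp ?\<rho> \<xi>v) (x t)"
    proof -
      have tt: "t \<in> {0..1}" using t by auto
      have "- br (rsharp ?\<rho> \<xi>v) (x t) = - br (rsharp ?\<rho> \<xi>v) (- fst (p t) + rsharp ?\<rho> (snd (p t)))"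
        by (simp add: x_def)
      also have "\<dots> = - (- (\<Sum>i\<in>UNIV. inner \<xi>v (pderiv_r r i (l0 + t *\<^sub>R v) *v snd (p t)) *\<^sub>R hb i))
         + rsharp (\<Sum>i\<in>UNIV. v $ i *\<^sub>R pderiv_r r i (l0 + t *\<^sub>R v)) (snd (p t))
         + rsharp ?\<rho> (- adT br (rsharp ?\<rho> (snd (p t))) \<xi>v + adT br (rsharp ?\<rho> \<xi>v) (snd (p t)) + adT br (fst (p t)) \<xi>v)"
        by (rule main_identity[OF fH[OF tt] sP[OF tt] hv, symmetric])
      finally show ?thesis by (simp add: Fo_def algebra_simps)
    qed
    with d show "(x has_vector_derivative - br (rsharp ?\<rho> \<xi>v) (x t)) (at t)" by simp
  qed
qed

end

lemma perp_span:
  assumes "\<And>b. b \<in> B \<Longrightarrow> inner e b = 0" "y \<in> span B"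
  shows "inner e y = 0"
proof -
  have "span B \<subseteq> {x. inner e x = 0}"
    by (rule span_minimal[OF _ subspace_hyperplane]) (use assms(1) in auto)
  then show ?thesis using assms(2) by auto
qed

lemma onb_sum_inner:
  assumes fin: "finite B" and orth: "pairwise orthogonal B" and nb: "\<And>b. b \<in> B \<Longrightarrow> norm b = 1"
    and b': "b' \<in> B"
  shows "(\<Sum>b\<in>B. f b * inner b' b) = f b'"
proof -
  have "(\<Sum>b\<in>B. f b * inner b' b) = f b' * inner b' b' + (\<Sum>b\<in>B - {b'}. f b * inner b' b)"
    using sum.remove[OF fin b'] by simp
  also have "(\<Sum>b\<in>B - {b'}. f b * inner b' b) = 0"
    by (rule sum.neutral) (use orth b' in \<open>auto simp: pairwise_def orthogonal_def\<close>)
  also have "inner b' b' = 1" using nb[OF b'] by (simp add: power2_norm_eq_inner[symmetric])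
  finally show ?thesis by simp
qed

lemma onb_expand:
  assumes fin: "finite B" and orth: "pairwise orthogonal B" and nb: "\<And>b. b \<in> B \<Longrightarrow> norm b = 1"
    and d: "d \<in> span B"
  shows "(\<Sum>b\<in>B. inner b d *\<^sub>R b) = d"
proof -
  define e where "e = d - (\<Sum>b\<in>B. inner b d *\<^sub>R b)"
  have eB: "e \<in> span B" unfolding e_def
    by (intro span_diff d span_sum span_scale span_base)
  have "inner e b' = 0" if b': "b' \<in> B" for b'
  proof -
    have "inner b' (\<Sum>b\<in>B. inner b d *\<^sub>R b) = (\<Sum>b\<in>B. inner b d * inner b' b)"
      by (simp add: inner_sum_right)
    also have "\<dots> = inner b' d" by (rule onb_sum_inner[OF fin orth nb b'])
    finally show ?thesis by (simp add: e_def inner_diff_right inner_commute)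
  qed
  then have "inner e e = 0" using perp_span[OF _ eB] by blast
  then show ?thesis unfolding e_def by simp
qed

context dsetup
begin

lemma family:
  assumes hv: "\<And>i. inner \<xi>v (hb i) = v $ i"
  obtains B X where "finite B" "B \<subseteq> g_lam hb r l0" "span B = g_lam hb r l0"
    "card B = dim (g_lam hb r l0)" "independent B"
    "\<And>b. b \<in> B \<Longrightarrow> norm b = 1" "pairwise orthogonal B"
    "\<And>b. b \<in> B \<Longrightarrow> X b 0 = b" "\<And>b. b \<in> B \<Longrightarrow> continuous_on {0..1} (X b)"
    "\<And>b t. b \<in> B \<Longrightarrow> t \<in> {0..1} \<Longrightarrow> X b t \<in> g_lam hb r (l0 + t *\<^sub>R v)"
    "\<And>b t. b \<in> B \<Longrightarrow> 0 < t \<Longrightarrow> t < 1 \<Longrightarrow>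
        (X b has_vector_derivative - br (rsharp (r (l0 + t *\<^sub>R v)) \<xi>v) (X b t)) (at t)"
proof -
  obtain B where B: "B \<subseteq> g_lam hb r l0" "pairwise orthogonal B" "\<And>x. x \<in> B \<Longrightarrow> norm x = 1"
    "independent B" "card B = dim (g_lam hb r l0)" "span B = g_lam hb r l0"
    using orthonormal_basis_subspace[OF g_sub] by metis
  have "\<forall>b\<in>B. \<exists>x. x 0 = b \<and> continuous_on {0..1} x \<and> (\<forall>t\<in>{0..1}. x t \<in> g_lam hb r (l0 + t *\<^sub>R v)) \<and>
     (\<forall>t. 0 < t \<longrightarrow> t < 1 \<longrightarrow> (x has_vector_derivative - br (rsharp (r (l0 + t *\<^sub>R v)) \<xi>v) (x t)) (at t))"
    using transport[OF hv] B(1) by blast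
  then obtain X where X: "\<forall>b\<in>B. X b 0 = b \<and> continuous_on {0..1} (X b) \<and> (\<forall>t\<in>{0..1}. X b t \<in> g_lam hb r (l0 + t *\<^sub>R v)) \<and>
     (\<forall>t. 0 < t \<longrightarrow> t < 1 \<longrightarrow> (X b has_vector_derivative - br (rsharp (r (l0 + t *\<^sub>R v)) \<xi>v) (X b t)) (at t))"
    by (rule bchoice[elim_format]) blast
  show ?thesis
    by (rule that[of B X]) (use B X finiteI_independent[OF B(4)] in auto)
qed

end

context dsetup
begin

lemma path_main:
  assumes hv: "\<And>i. inner \<xi>v (hb i) = v $ i"
  shows "dim (g_lam hb r l0) \<le> dim (g_lam hb r (l0 + v)) \<and>
    ((\<forall>t\<in>{0..1}. dim (g_lam hb r (l0 + t *\<^sub>R v)) \<le> dim (g_lam hb r l0)) \<longrightarrow>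
       g_lam hb r (l0 + v) = g_lam hb r l0)"
proof -
  let ?GZ = "g_lam hb r l0"
  let ?GP = "\<lambda>t. g_lam hb r (l0 + t *\<^sub>R v)"
  obtain B X where fin: "finite B" and Bg: "B \<subseteq> ?GZ" and spB: "span B = ?GZ"
    and cardB: "card B = dim ?GZ" and indB: "independent B"
    and nB: "\<And>b. b \<in> B \<Longrightarrow> norm b = 1" and oB: "pairwise orthogonal B"
    and X0: "\<And>b. b \<in> B \<Longrightarrow> X b 0 = b" and Xc: "\<And>b. b \<in> B \<Longrightarrow> continuous_on {0..1} (X b)"
    and Xg: "\<And>b t. b \<in> B \<Longrightarrow> t \<in> {0..1} \<Longrightarrow> X b t \<in> ?GP t"
    and Xd: "\<And>b t. b \<in> B \<Longrightarrow> 0 < t \<Longrightarrow> t < 1 \<Longrightarrow>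
        (X b has_vector_derivative - br (rsharp (r (l0 + t *\<^sub>R v)) \<xi>v) (X b t)) (at t)"
    by (rule family[OF hv, of l0]) blast
  define G where "G t y = - br (rsharp (r (l0 + t *\<^sub>R v)) \<xi>v) y" for t y
  have cG: "continuous_on ({0..1} \<times> UNIV) (\<lambda>q. G (fst q) (snd q))"
  proof -
    have "continuous_on ({0..1} \<times> UNIV) (\<lambda>q::real \<times> (real^'n). r (l0 + fst q *\<^sub>R v))"
      by (rule continuous_on_compose2[OF r_cont]) (auto intro!: continuous_intros)
    then show ?thesis unfolding G_def by (intro continuous_intros)
  qed
  have lG: "linear (G t)" for t
    by (rule linearI) (simp_all add: G_def br_add2 br_scale2)
  have g0sub: "subspace ?GZ" by (rule g_sub)
  define \<Phi> where "\<Phi> t d = (\<Sum>b\<in>B. inner b d *\<^sub>R X b t)" for t d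
  have \<Phi>lin: "linear (\<Phi> t)" for t
    by (rule linearI) (simp_all add: \<Phi>_def inner_add_right scaleR_add_left sum.distrib scaleR_sum_right)
  have \<Phi>0: "\<Phi> 0 d = d" if dg: "d \<in> ?GZ" for d
  proof -
    have "\<Phi> 0 d = (\<Sum>b\<in>B. inner b d *\<^sub>R b)" unfolding \<Phi>_def by (rule sum.cong) (simp_all add: X0)
    also have "\<dots> = d"
    proof -
      have dB: "d \<in> span B" using dg spB by simp
      show ?thesis by (rule onb_expand[OF fin oB nB dB])
    qed
    finally show ?thesis .
  qed
  have \<Phi>g: "\<Phi> t d \<in> ?GP t" if "t \<in> {0..1}" for t d
    unfolding \<Phi>_def by (intro subspace_sum[OF g_sub] subspace_scale[OF g_sub] Xg that)
  have \<Phi>c: "continuous_on {0..1} (\<lambda>t. \<Phi> t d)" for d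
    unfolding \<Phi>_def by (intro continuous_intros Xc) 
  have \<Phi>d: "((\<lambda>t. \<Phi> t d) has_vector_derivative G t (\<Phi> t d)) (at t)" if "0 < t" "t < 1" for t d
  proof -
    have "((\<lambda>t. \<Phi> t d) has_vector_derivative (\<Sum>b\<in>B. inner b d *\<^sub>R G t (X b t))) (at t)"
      unfolding \<Phi>_def
    proof (rule has_vector_derivative_sum)
      fix b assume b: "b \<in> B"
      show "((\<lambda>t. inner b d *\<^sub>R X b t) has_vector_derivative inner b d *\<^sub>R G t (X b t)) (at t)"
        by (rule bounded_linear.has_vector_derivative[OF bounded_linear_scaleR_right])
           (simp add: G_def Xd[OF b that])
    qed
    moreover have "(\<Sum>b\<in>B. inner b d *\<^sub>R G t (X b t)) = G t (\<Phi> t d)"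
      unfolding \<Phi>_def by (simp add: linear_sum[OF lG] linear_scale[OF lG])
    ultimately show ?thesis by simp
  qed
  have \<Phi>inj: "d = 0" if t1: "t1 \<in> {0..1}" and z: "\<Phi> t1 d = 0" and d: "d \<in> ?GZ" for t1 d
  proof -
    have "\<Phi> 0 d = 0"
      by (rule lin_ode_unique[OF cG lG \<Phi>c \<Phi>d t1 z]) auto
    then show ?thesis using \<Phi>0[OF d] by simp
  qed
  have \<Phi>injon: "inj_on (\<Phi> t) ?GZ" if t: "t \<in> {0..1}" for t
    using linear_inj_on_iff_eq_0[OF \<Phi>lin g0sub] \<Phi>inj[OF t] by blast
  have dimim: "dim (\<Phi> t ` ?GZ) = dim ?GZ" if t: "t \<in> {0..1}" for t
  proof (rule dim_image_eq[OF \<Phi>lin])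
    have sp: "span ?GZ = ?GZ" by (rule span_eq_iff[THEN iffD2, OF g0sub])
    show "inj_on (\<Phi> t) (span ?GZ)" unfolding sp by (rule \<Phi>injon[OF t])
  qed
  have imsub: "\<Phi> t ` ?GZ \<subseteq> ?GP t" if t: "t \<in> {0..1}" for t using \<Phi>g[OF t] by blast
  have dim1: "dim ?GZ \<le> dim (?GP 1)"
    using dim_subset[OF imsub[of 1]] dimim[of 1] by simp
  have part2: "g_lam hb r (l0 + v) = ?GZ" if dle: "\<forall>t\<in>{0..1}. dim (?GP t) \<le> dim ?GZ"
  proof -
    have imeq: "\<Phi> t ` ?GZ = ?GP t" if t: "t \<in> {0..1}" for t
    proof (rule subspace_dim_equal)
      show "subspace (\<Phi> t ` ?GZ)" by (rule linear_subspace_image[OF \<Phi>lin g0sub])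
      show "subspace (?GP t)" by (rule g_sub)
      show "\<Phi> t ` ?GZ \<subseteq> ?GP t" by (rule imsub[OF t])
      show "dim (?GP t) \<le> dim (\<Phi> t ` ?GZ)" using dle t dimim[OF t] by simp
    qed
    obtain m where m: "m > 0" "\<And>t d. t \<in> {0..1} \<Longrightarrow> d \<in> ?GZ \<Longrightarrow> m * norm d \<le> norm (\<Phi> t d)"
    proof (cases "?GZ \<inter> sphere 0 1 = {}")
      case True
      have "d = 0" if "d \<in> ?GZ" for d
      proof (rule ccontr)
        assume "d \<noteq> 0"
        then have "d /\<^sub>R norm d \<in> ?GZ \<inter> sphere 0 1" using that subspace_scale[OF g0sub] by auto
        then show False using True by blast
      qed
      then have z: "\<And>d. d \<in> ?GZ \<Longrightarrow> d = 0" by blast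
      show ?thesis
      proof (rule that[of 1])
        fix t :: real and d assume "t \<in> {0..1}" "d \<in> ?GZ"
        then have "d = 0" using z by blast
        then show "1 * norm d \<le> norm (\<Phi> t d)" by simp
      qed simp
    next
      case False
      let ?K = "{0..1::real} \<times> (?GZ \<inter> sphere 0 1)"
      have "compact ?K"
        by (rule compact_Times[OF compact_Icc closed_Int_compact[OF closed_subspace[OF g0sub] compact_sphere]])
      moreover have "?K \<noteq> {}" using False by auto
      moreover have "continuous_on ?K (\<lambda>q. norm (\<Phi> (fst q) (snd q)))"
      proof -
        have "continuous_on ?K (\<lambda>q. \<Sum>b\<in>B. inner b (snd q) *\<^sub>R X b (fst q))"
        proof (intro continuous_intros)
          fix b assume "b \<in> B"
          show "continuous_on ?K (\<lambda>q. X b (fst q))"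
            by (rule continuous_on_compose2[OF Xc[OF \<open>b \<in> B\<close>]]) (auto intro!: continuous_intros)
        qed
        then show ?thesis unfolding \<Phi>_def by (rule continuous_on_norm)
      qed
      ultimately obtain q where q: "q \<in> ?K" "\<And>y. y \<in> ?K \<Longrightarrow> norm (\<Phi> (fst q) (snd q)) \<le> norm (\<Phi> (fst y) (snd y))"
        using continuous_attains_inf[of ?K "\<lambda>q. norm (\<Phi> (fst q) (snd q))"] by blast
      let ?m = "norm (\<Phi> (fst q) (snd q))"
      have "?m > 0"
      proof (rule ccontr)
        assume "\<not> ?m > 0"
        then have "\<Phi> (fst q) (snd q) = 0" by simp
        then have "snd q = 0" using \<Phi>inj[of "fst q" "snd q"] q(1) by auto
        then show False using q(1) by auto
      qed
      show ?thesis
      proof (rule that[of ?m])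
        show "?m > 0" by fact
        fix t :: real and d assume t: "t \<in> {0..1}" and d: "d \<in> ?GZ"
        show "?m * norm d \<le> norm (\<Phi> t d)"
        proof (cases "d = 0")
          case True then show ?thesis using linear_0[OF \<Phi>lin] by simp
        next
          case False
          have "(t, d /\<^sub>R norm d) \<in> ?K" using t d False subspace_scale[OF g0sub] by auto
          then have "?m \<le> norm (\<Phi> t (d /\<^sub>R norm d))" using q(2)[of "(t, d /\<^sub>R norm d)"] by simp
          also have "\<Phi> t (d /\<^sub>R norm d) = (1 / norm d) *\<^sub>R \<Phi> t d"
            using linear_scale[OF \<Phi>lin] by (simp add: divide_inverse)
          finally have "?m \<le> norm (\<Phi> t d) / norm d" using False by simp
          then show ?thesis using False by (simp add: field_simps)
        qed
      qed
    qed
    have cGX: "continuous_on {0..1} (\<lambda>t. G t (X b t))" if "b \<in> B" for b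
      by (rule cont_comp_F[OF cG Xc[OF that]])
    have "compact ((\<lambda>t. \<Sum>b\<in>B. norm (G t (X b t))) ` {0..1})"
    proof (rule compact_continuous_image[OF _ compact_Icc])
      show "continuous_on {0..1} (\<lambda>t. \<Sum>b\<in>B. norm (G t (X b t)))"
        by (rule continuous_on_sum, rule continuous_on_norm, rule cGX)
    qed
    then have "bounded ((\<lambda>t. \<Sum>b\<in>B. norm (G t (X b t))) ` {0..1})" by (rule compact_imp_bounded)
    then have "\<exists>N. \<forall>y\<in>(\<lambda>t. \<Sum>b\<in>B. norm (G t (X b t))) ` {0..1}. norm y \<le> N"
      unfolding bounded_iff .
    then obtain N where N0: "\<forall>y\<in>(\<lambda>t. \<Sum>b\<in>B. norm (G t (X b t))) ` {0..1}. norm y \<le> N"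
      by (rule exE)
    have N: "norm (G t (X b t)) \<le> N" if "t \<in> {0..1}" "b \<in> B" for t b
    proof -
      have "norm (G t (X b t)) \<le> (\<Sum>b\<in>B. norm (G t (X b t)))"
        by (rule member_le_sum) (use fin that in auto)
      also have "\<dots> \<le> N"
      proof -
        have "norm (\<Sum>b\<in>B. norm (G t (X b t))) \<le> N" using N0 that(1) by blast
        then show ?thesis by (metis abs_ge_self real_norm_def order_trans)
      qed
      finally show ?thesis .
    qed
    define C where "C = N / m"
    have coef: "\<exists>d\<in>?GZ. G t (X b t) = \<Phi> t d \<and> norm d \<le> C" if t: "t \<in> {0..1}" and b: "b \<in> B" for t b
    proof -
      have "rsharp (r (l0 + t *\<^sub>R v)) \<xi>v \<in> ?GP t" by (rule rsharp_in_g)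
      moreover have "X b t \<in> ?GP t" by (rule Xg[OF b t])
      ultimately have "br (rsharp (r (l0 + t *\<^sub>R v)) \<xi>v) (X b t) \<in> ?GP t"
        using g_subalg[of "l0 + t *\<^sub>R v"] unfolding lie_subalgebra_def by blast
      then have "G t (X b t) \<in> ?GP t" unfolding G_def using subspace_neg[OF g_sub] by blast
      then obtain d where d: "d \<in> ?GZ" "G t (X b t) = \<Phi> t d" using imeq[OF t] by blast
      have "m * norm d \<le> N" using m(2)[OF t d(1)] N[OF t b] d(2) by simp
      then have "norm d \<le> C" using m(1) by (simp add: C_def field_simps)
      then show ?thesis using d by blast
    qed
    define Q where "Q y = y - (\<Sum>b\<in>B. inner b y *\<^sub>R b)" for y
    have Qlin: "linear Q"
    proof -
      have l1: "linear (\<lambda>y. \<Sum>b\<in>B. inner b y *\<^sub>R b)"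
        by (rule linearI) (simp_all add: inner_add_right scaleR_add_left sum.distrib scaleR_sum_right)
      have "linear (\<lambda>y. y - (\<Sum>b\<in>B. inner b y *\<^sub>R b))"
        by (rule linear_compose_sub[OF linear_ident l1])
      then show ?thesis unfolding Q_def[abs_def] .
    qed
    have Qz: "Q y = 0" if "y \<in> ?GZ" for y
      unfolding Q_def using onb_expand[OF fin oB nB, of y] that spB by simp
    have Qg: "y \<in> ?GZ" if "Q y = 0" for y
    proof -
      have "y = (\<Sum>b\<in>B. inner b y *\<^sub>R b)" using that by (simp add: Q_def)
      also have "\<dots> \<in> span B" by (intro span_sum span_scale span_base)
      finally show ?thesis using spB by simp
    qed
    have C0: "C \<ge> 0" using coef[of 0] X0 fin Bg
    proof -
      show ?thesis
      proof (cases "B = {}")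
        case True
        have "N \<ge> 0" using N0 by (auto simp: True)
        then show ?thesis using m(1) by (simp add: C_def)
      next
        case False
        then obtain b where "b \<in> B" by blast
        then have "\<exists>d\<in>?GZ. G 0 (X b 0) = \<Phi> 0 d \<and> norm d \<le> C" by (intro coef) auto
        then obtain d :: "real^'n" where "norm d \<le> C" by blast
        then show ?thesis using norm_ge_zero[of d] by linarith
      qed
    qed
    define \<psi> where "\<psi> t = (\<Sum>b\<in>B. inner (Q (X b t)) (Q (X b t)))" for t
    define \<psi>' where "\<psi>' t = (\<Sum>b\<in>B. 2 * inner (Q (X b t)) (Q (G t (X b t))))" for t
    have bQ: "bounded_linear Q" using Qlin linear_conv_bounded_linear by blast
    have \<psi>d: "(\<psi> has_real_derivative \<psi>' t) (at t)" if "0 < t" "t < 1" for t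
    proof -
      have "((\<lambda>t. inner (Q (X b t)) (Q (X b t))) has_real_derivative 2 * inner (Q (X b t)) (Q (G t (X b t)))) (at t)"
        if b: "b \<in> B" for b
      proof -
        have dq: "((\<lambda>t. Q (X b t)) has_vector_derivative Q (G t (X b t))) (at t)"
          using bounded_linear.has_vector_derivative[OF bQ Xd[OF b \<open>0 < t\<close> \<open>t < 1\<close>]] by (simp add: G_def)
        have "((\<lambda>t. inner (Q (X b t)) (Q (X b t))) has_vector_derivative
            (inner (Q (X b t)) (Q (G t (X b t))) + inner (Q (G t (X b t))) (Q (X b t)))) (at t)"
          by (rule bounded_bilinear.has_vector_derivative[OF bounded_bilinear_inner dq dq])
        then show ?thesis by (simp add: has_real_derivative_iff_has_vector_derivative inner_commute)
      qed
      then show ?thesis unfolding \<psi>_def \<psi>'_def by (rule DERIV_sum)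
    qed
    have \<psi>c: "continuous_on {0..1} \<psi>" unfolding \<psi>_def
      by (intro continuous_intros bounded_linear.continuous_on[OF bQ] Xc)
    have \<psi>nn: "\<psi> t \<ge> 0" for t unfolding \<psi>_def by (intro sum_nonneg) simp
    have \<psi>0: "\<psi> 0 = 0" unfolding \<psi>_def using Qz X0 Bg by (intro sum.neutral) auto
    let ?a = "\<lambda>t b. norm (Q (X b t))"
    have \<psi>a: "\<psi> t = (\<Sum>b\<in>B. ?a t b ^ 2)" for t
      unfolding \<psi>_def by (simp add: power2_norm_eq_inner)
    have \<psi>bd: "\<psi>' t \<le> (2 * C * card B) * \<psi> t" if t: "0 < t" "t < 1" for t
    proof -
      have tt: "t \<in> {0..1}" using t by auto
      have trm: "2 * inner (Q (X b t)) (Q (G t (X b t))) \<le> (\<Sum>b'\<in>B. C * (?a t b ^ 2 + ?a t b' ^ 2))"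
        if b: "b \<in> B" for b
      proof -
        obtain d where d: "d \<in> ?GZ" "G t (X b t) = \<Phi> t d" "norm d \<le> C" using coef[OF tt b] by blast
        have "Q (G t (X b t)) = (\<Sum>b'\<in>B. inner b' d *\<^sub>R Q (X b' t))"
          unfolding d(2) \<Phi>_def by (simp add: linear_sum[OF Qlin] linear_scale[OF Qlin])
        then have "2 * inner (Q (X b t)) (Q (G t (X b t))) = (\<Sum>b'\<in>B. 2 * (inner b' d * inner (Q (X b t)) (Q (X b' t))))"
          by (simp add: inner_sum_right sum_distrib_left)
        also have "\<dots> \<le> (\<Sum>b'\<in>B. C * (?a t b ^ 2 + ?a t b' ^ 2))"
        proof (rule sum_mono)
          fix b' assume b': "b' \<in> B"
          have c1: "\<bar>inner b' d\<bar> \<le> C"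
            using Cauchy_Schwarz_ineq2[of b' d] nB[OF b'] d(3) by simp
          have c2: "\<bar>inner (Q (X b t)) (Q (X b' t))\<bar> \<le> ?a t b * ?a t b'" by (rule Cauchy_Schwarz_ineq2)
          have c3: "2 * (?a t b * ?a t b') \<le> ?a t b ^ 2 + ?a t b' ^ 2"
            using sum_squares_bound[of "?a t b" "?a t b'"] by simp
          have "2 * (inner b' d * inner (Q (X b t)) (Q (X b' t))) \<le> 2 * (\<bar>inner b' d\<bar> * \<bar>inner (Q (X b t)) (Q (X b' t))\<bar>)"
            using abs_ge_self[of "inner b' d * inner (Q (X b t)) (Q (X b' t))"] by (simp add: abs_mult)
          also have "\<dots> \<le> 2 * (C * (?a t b * ?a t b'))"
            using c1 c2 C0 by (intro mult_left_mono mult_mono) auto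
          also have "\<dots> = C * (2 * (?a t b * ?a t b'))" by simp
          also have "\<dots> \<le> C * (?a t b ^ 2 + ?a t b' ^ 2)" using c3 C0 by (intro mult_left_mono) auto
          finally show "2 * (inner b' d * inner (Q (X b t)) (Q (X b' t))) \<le> C * (?a t b ^ 2 + ?a t b' ^ 2)" .
        qed
        finally show ?thesis .
      qed
      have "\<psi>' t \<le> (\<Sum>b\<in>B. \<Sum>b'\<in>B. C * (?a t b ^ 2 + ?a t b' ^ 2))"
        unfolding \<psi>'_def by (rule sum_mono) (rule trm)
      also have "\<dots> = (\<Sum>b\<in>B. \<Sum>b'\<in>B. C * ?a t b ^ 2) + (\<Sum>b\<in>B. \<Sum>b'\<in>B. C * ?a t b' ^ 2)"
        by (simp only: distrib_left sum.distrib)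
      also have "(\<Sum>b\<in>B. \<Sum>b'\<in>B. C * ?a t b ^ 2) = (\<Sum>b\<in>B. real (card B) * (C * ?a t b ^ 2))"
        by (simp only: sum_constant)
      also have "\<dots> = C * card B * \<psi> t" unfolding \<psi>a by (simp add: sum_distrib_left algebra_simps)
      also have "(\<Sum>b\<in>B. \<Sum>b'\<in>B. C * ?a t b' ^ 2) = (\<Sum>b\<in>B. C * \<psi> t)"
        unfolding \<psi>a by (simp add: sum_distrib_left)
      also have "\<dots> = C * card B * \<psi> t" by (simp only: sum_constant) (simp add: algebra_simps)
      also have "C * card B * \<psi> t + C * card B * \<psi> t = (2 * C * card B) * \<psi> t" by simp
      finally show ?thesis .
    qed
    have \<psi>1: "\<psi> 1 = 0"
      by (rule gronwall_fwd[of 0 1 \<psi> \<psi>' "2 * C * card B"]) (use \<psi>c \<psi>d \<psi>bd \<psi>0 \<psi>nn in auto)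
    have X1: "X b 1 \<in> ?GZ" if b: "b \<in> B" for b
    proof -
      have "\<forall>b\<in>B. inner (Q (X b 1)) (Q (X b 1)) = 0"
        using \<psi>1 sum_nonneg_eq_0_iff[OF fin, of "\<lambda>b. inner (Q (X b 1)) (Q (X b 1))"] by (simp add: \<psi>_def)
      then have "Q (X b 1) = 0" using b by simp
      then show ?thesis by (rule Qg)
    qed
    have "?GP 1 \<subseteq> ?GZ"
    proof
      fix y assume "y \<in> ?GP 1"
      then obtain d where yd: "y = \<Phi> 1 d" using imeq[of 1] by auto
      have "\<Phi> 1 d \<in> ?GZ" unfolding \<Phi>_def by (intro subspace_sum[OF g0sub] subspace_scale[OF g0sub] X1)
      then show "y \<in> ?GZ" using yd by simp
    qed
    then have "?GP 1 = ?GZ"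
      by (intro subspace_dim_equal g_sub) (use dim1 in auto)
    then show ?thesis by simp
  qed
  show ?thesis using dim1 part2 by simp
qed

end

lemma outer_mv: "outer a b *v z = inner b z *\<^sub>R (a::real^'n)"
  by (simp add: outer_def vec_eq_iff matrix_vector_mult_def inner_vec_def sum_distrib_left algebra_simps)

lemma sum_mv: "(\<Sum>b\<in>B. f b) *v z = (\<Sum>b\<in>B. f b *v (z::real^'n))" for f :: "'b \<Rightarrow> real^'n^'m"
  by (induction B rule: infinite_finite_induct) (simp_all add: matrix_vector_mult_add_rdistrib)

lemma scale_mv: "(c *\<^sub>R A) *v z = c *\<^sub>R ((A::real^'n^'m) *v z)"
  by (simp add: vec_eq_iff matrix_vector_mult_def sum_distrib_left algebra_simps)

lemma neg_mv': "(- A) *v z = - ((A::real^'n^'m) *v z)"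
  by (simp add: vec_eq_iff matrix_vector_mult_def sum_negf)

lemma wedge_lemma:
  fixes \<rho> :: "real^'n^'n"
  assumes V: "subspace V" and anti: "transpose \<rho> = - \<rho>" and col: "\<And>z. \<rho> *v z \<in> V"
  shows "\<rho> \<in> wedge2 V"
proof -
  obtain B where B: "B \<subseteq> V" "pairwise orthogonal B" "\<And>x. x \<in> B \<Longrightarrow> norm x = 1"
    "independent B" "card B = dim V" "span B = V"
    using orthonormal_basis_subspace[OF V] by metis
  have fin: "finite B" using B(4) by (rule finiteI_independent)
  define P where "P z = (\<Sum>b\<in>B. inner b z *\<^sub>R b)" for z
  have Pid: "P y = y" if "y \<in> V" for y
  proof -
    have yB: "y \<in> span B" using that B(6) by simp
    show ?thesis unfolding P_def by (rule onb_expand[OF fin B(2) B(3) yB])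
  qed
  have perp: "inner w (z - P z) = 0" if "w \<in> V" for w z
  proof -
    have "inner b' (z - P z) = 0" if "b' \<in> B" for b'
    proof -
      have "inner b' (P z) = (\<Sum>b\<in>B. inner b z * inner b' b)" by (simp add: P_def inner_sum_right)
      also have "\<dots> = inner b' z" by (rule onb_sum_inner[OF fin B(2) B(3) that])
      finally show ?thesis by (simp add: inner_diff_right)
    qed
    then have "inner (z - P z) w = 0" using perp_span[of B "z - P z" w] that B(6)
      by (simp add: inner_commute)
    then show ?thesis by (simp add: inner_commute)
  qed
  have rhoP: "\<rho> *v P z = \<rho> *v z" for z
  proof (rule vec_eq_by_inner)
    fix w
    have "inner w (\<rho> *v (z - P z)) = inner (transpose \<rho> *v w) (z - P z)" by (rule dot_mv)
    also have "\<dots> = - inner (\<rho> *v w) (z - P z)" by (simp only: anti neg_mv' inner_minus_left)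
    also have "\<dots> = 0" using perp[OF col] by simp
    finally show "inner w (\<rho> *v P z) = inner w (\<rho> *v z)"
      by (simp add: matrix_vector_mult_diff_distrib inner_diff_right)
  qed
  define M where "M = (\<Sum>b\<in>B. (1/2) *\<^sub>R (outer (\<rho> *v b) b - outer b (\<rho> *v b)))"
  have "M = \<rho>"
  proof -
    have "M *v z = \<rho> *v z" for z
    proof -
      have lin: "linear (\<lambda>x. \<rho> *v x)" by simp
      have s1: "(\<Sum>b\<in>B. inner b z *\<^sub>R (\<rho> *v b)) = \<rho> *v z"
      proof -
        have "(\<Sum>b\<in>B. inner b z *\<^sub>R (\<rho> *v b)) = \<rho> *v P z"
          unfolding P_def by (simp add: linear_sum[OF lin] linear_scale[OF lin])
        then show ?thesis using rhoP by simp
      qed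
      have s2: "(\<Sum>b\<in>B. inner (\<rho> *v b) z *\<^sub>R b) = - (\<rho> *v z)"
      proof -
        have "inner (\<rho> *v b) z = inner b (- (\<rho> *v z))" for b
        proof -
          have "inner (\<rho> *v b) z = inner z (\<rho> *v b)" by (rule inner_commute)
          also have "\<dots> = inner (transpose \<rho> *v z) b" by (rule dot_mv)
          also have "\<dots> = inner b (- (\<rho> *v z))" by (simp only: anti neg_mv' inner_commute)
          finally show ?thesis .
        qed
        then have "(\<Sum>b\<in>B. inner (\<rho> *v b) z *\<^sub>R b) = P (- (\<rho> *v z))" by (simp add: P_def)
        also have "\<dots> = - (\<rho> *v z)"
        proof (rule Pid)
          have "\<rho> *v (- z) \<in> V" by (rule col)
          then show "- (\<rho> *v z) \<in> V" by (simp add: linear_neg[OF lin])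
        qed
        finally show ?thesis .
      qed
      have "M *v z = (\<Sum>b\<in>B. (1/2) *\<^sub>R (inner b z *\<^sub>R (\<rho> *v b) - inner (\<rho> *v b) z *\<^sub>R b))"
        unfolding M_def sum_mv scale_mv by (simp add: matrix_vector_mult_diff_rdistrib outer_mv)
      also have "\<dots> = (1/2) *\<^sub>R ((\<Sum>b\<in>B. inner b z *\<^sub>R (\<rho> *v b)) - (\<Sum>b\<in>B. inner (\<rho> *v b) z *\<^sub>R b))"
        by (simp only: scaleR_sum_right sum_subtractf scaleR_diff_right)
      also have "\<dots> = \<rho> *v z" unfolding s1 s2 by (simp add: scaleR_2[symmetric])
      finally show ?thesis .
    qed
    then show ?thesis by (simp add: matrix_eq)
  qed
  moreover have "M \<in> wedge2 V"
    unfolding M_def wedge2_def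
    by (intro span_sum span_scale span_base) (use B(1) col in blast)
  ultimately show ?thesis by simp
qed

context dsetup
begin

lemma dim_le: "dim (g_lam hb r l0) \<le> dim (g_lam hb r mu)"
proof -
  obtain \<xi>v where hv: "\<forall>i. inner \<xi>v (hb i) = (mu - l0) $ i" using split_ex by blast
  have "dim (g_lam hb r l0) \<le> dim (g_lam hb r (l0 + (mu - l0)))"
    using path_main[of \<xi>v "mu - l0" l0] hv by blast
  then show ?thesis by simp
qed

lemma g_const: "g_lam hb r mu = g_lam hb r l0"
proof -
  obtain \<xi>v where hv: "\<forall>i. inner \<xi>v (hb i) = (mu - l0) $ i" using split_ex by blast
  have "g_lam hb r (l0 + (mu - l0)) = g_lam hb r l0"
    using path_main[of \<xi>v "mu - l0" l0] hv dim_le by blast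
  then show ?thesis by simp
qed

lemma main_concl:
  "(\<forall>lam mu. g_lam hb r lam = g_lam hb r mu) \<and>
   (\<forall>g1. g1 = g_lam hb r 0 \<longrightarrow>
       (\<forall>lam. r lam \<in> wedge2 g1) \<and> tdrm br g1 hb r \<and> nondegenerate g1 hb r)"
proof (intro conjI allI impI)
  fix lam mu show "g_lam hb r lam = g_lam hb r mu" by (rule g_const)
next
  fix g1 assume g1: "g1 = g_lam hb r 0"
  have w: "r lam \<in> wedge2 g1" for lam
  proof -
    have "r lam \<in> wedge2 (g_lam hb r lam)"
    proof (rule wedge_lemma[OF g_sub r_anti])
      fix z
      have "rsharp (r lam) z \<in> g_lam hb r lam" by (rule rsharp_in_g)
      then show "r lam *v z \<in> g_lam hb r lam" using r_mv[of lam z] subspace_neg[OF g_sub] by simp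
    qed
    then show ?thesis using g1 g_const[of lam 0] by simp
  qed
  show "r lam \<in> wedge2 g1" for lam by (rule w)
  show "tdrm br g1 hb r"
    unfolding tdrm_def
  proof (intro conjI allI)
    show "lie_subalgebra br g1" using g1 g_subalg by simp
    show "range hb \<subseteq> g1" using g1 H_g hb_H by blast
    show "smooth_map r" by (rule smooth)
    show "r lam \<in> wedge2 g1" for lam by (rule w)
    show "ad2 br (hb i) (r lam) = 0" for i lam by (rule ad2_hb)
    show "cdybe br hb r" by (rule cdy)
  qed
  show "nondegenerate g1 hb r"
    unfolding nondegenerate_def using g1 g_const by blast
qed

end

theorem corollary2p9:
  fixes br :: "real^'n \<Rightarrow> real^'n \<Rightarrow> real^'n"
    and hb :: "'l::finite \<Rightarrow> real^'n"
    and r :: "real^'l \<Rightarrow> real^'n^'n"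
  assumes "lie_algebra br"
    and "inj hb" and "independent (range hb)"
    and "\<forall>i j. br (hb i) (hb j) = 0"
    and "tdrm br UNIV hb r"
    and "splittable hb r"
  shows "(\<forall>lam mu. g_lam hb r lam = g_lam hb r mu) \<and>
         (\<forall>g1. g1 = g_lam hb r 0 \<longrightarrow>
             (\<forall>lam. r lam \<in> wedge2 g1) \<and> tdrm br g1 hb r \<and> nondegenerate g1 hb r)"
proof -
  interpret dsetup br hb r
    by unfold_locales (use assms in auto)
  show ?thesis by (rule main_concl)
qed

end
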